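(* Assume the setup and the monomial order in the context. Then $R$ is a Gröbner basis of $I$ with respect to $\le$, i.e. the monoid ideal $\mathrm{Tip}(I)$ of $X^*$ is generated by $\{\mathrm{tip}(g):g\in R\}$.
   Context: Let $k$ be a field and $n\ge 2$ an integer; write $[n]=\{1,\dots,n\}$ and $r(i)=n+1-i$. Let $X=\{u_{j,i},u^*_{j,i}:(j,i)\in[n]^2\}$ be a set of $2n^2$ distinct symbols and let $*$ be the involution of $X$ exchanging $u_{j,i}$ and $u^*_{j,i}$. Let $k\langle X\rangle$ be the free unital $k$-algebra on $X$, with $k$-basis the free monoid $X^*$ of monomials. For an $n\times n$ matrix $v=(v_{j,i})$ with entries in $X$ define $n\times n$ matrices $v^t,v^\star,v^\dagger$ with entries in $X$ by $v^t_{j,i}=v_{i,j}$, $v^\star_{j,i}=(v_{r(j),r(i)})^*$, $v^\dagger_{j,i}=(v_{r(i),r(j)})^*$. Let $u=(u_{j,i})$ and $M=\{u,u^t,u^\star,u^\dagger\}$. Let $I$ be the two-sided ideal generated by $R=\{\sum_{s=1}^n v_{j,r(s)}v^\dagger_{s,r(i)}-\delta_{j,i}1: v\in M,(j,i)\in[n]^2\}$. Monomial order: let $\le$ be the total order on $X$ with $u^*_{t,s}<u_{j,i}$ for all indices, $u_{t,s}<u_{j,i}$ iff $(t,s)<(j,i)$ lexicographically, and $u^*_{t,s}<u^*_{j,i}$ iff $(j,i)<(t,s)$ lexicographically; extend it degree-lexicographically to $X^*$ (shorter monomials are smaller; monomials of equal length are compared at the first differing letter). For $0\ne p\in k\langle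 X\rangle$, $\mathrm{tip}(p)$ is the $\le$-largest monomial with nonzero coefficient in $p$, and $\mathrm{Tip}(I)=\{\mathrm{tip}(p):0\ne p\in I\}$. *)

theory Defs
  imports Main
begin

text \<open>Symbols: U j i stands for u_{j,i}, Us j i for u*_{j,i}.\<close>
datatype sym = U nat nat | Us nat nat

definition Xset :: "nat \<Rightarrow> sym set" where
  "Xset n = {U j i | j i. j \<in> {1..n} \<and> i \<in> {1..n}} \<union> {Us j i | j i. j \<in> {1..n} \<and> i \<in> {1..n}}"

fun conj_sym :: "sym \<Rightarrow> sym" where
  "conj_sym (U j i) = Us j i"
| "conj_sym (Us j i) = U j i"

definition rr :: "nat \<Rightarrow> nat \<Rightarrow> nat" where
  "rr n i = n + 1 - i"

text \<open>Matrices with entries in X, as functions of (row, column).\<close>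
type_synonym smat = "nat \<Rightarrow> nat \<Rightarrow> sym"

definition mat_t :: "smat \<Rightarrow> smat" where
  "mat_t v = (\<lambda>j i. v i j)"

definition mat_star :: "nat \<Rightarrow> smat \<Rightarrow> smat" where
  "mat_star n v = (\<lambda>j i. conj_sym (v (rr n j) (rr n i)))"

definition mat_dag :: "nat \<Rightarrow> smat \<Rightarrow> smat" where
  "mat_dag n v = (\<lambda>j i. conj_sym (v (rr n i) (rr n j)))"

definition umat :: smat where
  "umat = (\<lambda>j i. U j i)"

definition Mset :: "nat \<Rightarrow> smat set" where
  "Mset n = {umat, mat_t umat, mat_star n umat, mat_dag n umat}"

text \<open>Noncommutative polynomials k<X>: finitely supported coefficient functions on
  words (the free monoid X^* as lists), supported on words over X.\<close>
definition poly_on :: "nat \<Rightarrow> (sym list \<Rightarrow> 'k::field) \<Rightarrow> bool" where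
  "poly_on n p \<longleftrightarrow> finite {w. p w \<noteq> 0} \<and> (\<forall>w. p w \<noteq> 0 \<longrightarrow> set w \<subseteq> Xset n)"

definition padd :: "(sym list \<Rightarrow> 'k::field) \<Rightarrow> (sym list \<Rightarrow> 'k) \<Rightarrow> sym list \<Rightarrow> 'k" where
  "padd p q = (\<lambda>w. p w + q w)"

definition pmul :: "(sym list \<Rightarrow> 'k::field) \<Rightarrow> (sym list \<Rightarrow> 'k) \<Rightarrow> sym list \<Rightarrow> 'k" where
  "pmul p q = (\<lambda>w. \<Sum>k\<le>length w. p (take k w) * q (drop k w))"

definition relpoly :: "nat \<Rightarrow> smat \<Rightarrow> nat \<Rightarrow> nat \<Rightarrow> sym list \<Rightarrow> 'k::field" where
  "relpoly n v j i = (\<lambda>w. (\<Sum>s\<in>{1..n}. if w = [v j (rr n s), mat_dag n v s (rr n i)] then 1 else 0)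
                        - (if j = i \<and> w = [] then 1 else 0))"

definition Rset :: "nat \<Rightarrow> (sym list \<Rightarrow> 'k::field) set" where
  "Rset n = {relpoly n v j i | v j i. v \<in> Mset n \<and> j \<in> {1..n} \<and> i \<in> {1..n}}"

inductive_set ideal_gen :: "nat \<Rightarrow> (sym list \<Rightarrow> 'k::field) set \<Rightarrow> (sym list \<Rightarrow> 'k) set"
  for n G where
  zero: "(\<lambda>_. 0) \<in> ideal_gen n G"
| gen: "g \<in> G \<Longrightarrow> poly_on n a \<Longrightarrow> poly_on n b \<Longrightarrow> pmul (pmul a g) b \<in> ideal_gen n G"
| add: "p \<in> ideal_gen n G \<Longrightarrow> q \<in> ideal_gen n G \<Longrightarrow> padd p q \<in> ideal_gen n G"

definition pair_less :: "nat \<times> nat \<Rightarrow> nat \<times> nat \<Rightarrow> bool" where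
  "pair_less a b \<longleftrightarrow> fst a < fst b \<or> (fst a = fst b \<and> snd a < snd b)"

fun sym_less :: "sym \<Rightarrow> sym \<Rightarrow> bool" where
  "sym_less (Us t s) (U j i) = True"
| "sym_less (U t s) (Us j i) = False"
| "sym_less (U t s) (U j i) = pair_less (t, s) (j, i)"
| "sym_less (Us t s) (Us j i) = pair_less (j, i) (t, s)"

definition word_less :: "sym list \<Rightarrow> sym list \<Rightarrow> bool" where
  "word_less v w \<longleftrightarrow> length v < length w \<or>
     (length v = length w \<and> (\<exists>p a b s t. v = p @ a # s \<and> w = p @ b # t \<and> sym_less a b))"

definition tip :: "(sym list \<Rightarrow> 'k::field) \<Rightarrow> sym list" where
  "tip p = (THE w. p w \<noteq> 0 \<and> (\<forall>v. p v \<noteq> 0 \<longrightarrow> v = w \<or> word_less v w))"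

definition Tip :: "(sym list \<Rightarrow> 'k::field) set \<Rightarrow> sym list set" where
  "Tip I = {tip p | p. p \<in> I \<and> p \<noteq> (\<lambda>_. 0)}"

definition mon_ideal :: "nat \<Rightarrow> sym list set \<Rightarrow> sym list set" where
  "mon_ideal n T = {a @ t @ b | a t b. t \<in> T \<and> a \<in> lists (Xset n) \<and> b \<in> lists (Xset n)}"

end

theory Submission
  imports Defs "HOL-Library.Function_Algebras"
begin

definition SL :: "(sym \<times> sym) set" where "SL = {(a,b). sym_less a b}"

lemma sym_less_irrefl: "\<not> sym_less a a"
  by (cases a) (auto simp: pair_less_def)

lemma sym_less_trans: "sym_less a b \<Longrightarrow> sym_less b c \<Longrightarrow> sym_less a c"
  by (cases a; cases b; cases c) (auto simp: pair_less_def)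

lemma sym_less_total: "a \<noteq> b \<Longrightarrow> sym_less a b \<or> sym_less b a"
  by (cases a; cases b) (auto simp: pair_less_def)

lemma word_less_lenlex: "word_less v w \<longleftrightarrow> (v,w) \<in> lenlex SL"
  by (auto simp: word_less_def lenlex_conv lex_conv SL_def)

lemma irrefl_SL: "irrefl SL" by (auto simp: irrefl_def SL_def sym_less_irrefl)
lemma trans_SL: "trans SL" by (auto simp: trans_def SL_def intro: sym_less_trans)
lemma total_SL: "total SL" by (auto simp: total_on_def SL_def dest: sym_less_total)

lemma wl_irrefl: "\<not> word_less w w"
  by (simp add: word_less_lenlex lenlex_irreflexive SL_def sym_less_irrefl)

lemma wl_trans: "word_less u v \<Longrightarrow> word_less v w \<Longrightarrow> word_less u w"
  using lenlex_trans trans_SL by (metis word_less_lenlex)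

lemma wl_asym: "word_less u v \<Longrightarrow> \<not> word_less v u"
  using wl_trans wl_irrefl by blast

lemma wl_total: "v \<noteq> w \<Longrightarrow> word_less v w \<or> word_less w v"
  using total_lenlex[OF total_SL] by (auto simp: total_on_def word_less_lenlex)

lemma wl_ctx: "word_less v w \<Longrightarrow> word_less (x @ v @ y) (x @ w @ y)"
  unfolding word_less_lenlex
  by (simp add: lenlex_append1 irrefl_SL flip: append_assoc)

lemma wl_len: "length v < length w \<Longrightarrow> word_less v w"
  by (simp add: word_less_def)

lemma wl_first: "sym_less a b \<Longrightarrow> length v = length w \<Longrightarrow> word_less (a#v) (b#w)"
  unfolding word_less_def by (rule disjI2, simp, rule exI[of _ "[]"], auto)

lemma wl_second: "sym_less a b \<Longrightarrow> length v = length w \<Longrightarrow> word_less (c#a#v) (c#b#w)"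
  using wl_ctx[OF wl_first, of a b v w "[c]" "[]"] by simp

lemma finite_Xset: "finite (Xset n)"
proof -
  have "Xset n \<subseteq> (\<lambda>(j,i). U j i) ` ({1..n}\<times>{1..n}) \<union> (\<lambda>(j,i). Us j i) ` ({1..n}\<times>{1..n})"
    by (auto simp: Xset_def)
  then show ?thesis by (rule finite_subset) auto
qed

lemma wl_restr:
  assumes a: "v \<in> lists X" "w \<in> lists X" "word_less v w"
  shows "(v, w) \<in> lenlex (SL \<inter> (X \<times> X))"
proof (cases "length v < length w")
  case True then show ?thesis by (simp add: lenlex_conv)
next
  case False
  with a obtain p x y s t where "length v = length w" "v = p @ x # s" "w = p @ y # t" "sym_less x y"
    by (auto simp: word_less_def)
  with a show ?thesis by (simp add: lenlex_conv lex_conv SL_def) blast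
qed

lemma wf_wl: "wf {(v,w). v \<in> lists (Xset n) \<and> w \<in> lists (Xset n) \<and> word_less v w}"
proof -
  let ?S = "SL \<inter> (Xset n \<times> Xset n)"
  have fin: "finite ?S" using finite_Xset by auto
  have tr: "trans ?S" using trans_SL by (auto simp: trans_def)
  have "acyclic ?S"
    unfolding acyclic_irrefl trancl_id[OF tr] using irrefl_SL by (auto simp: irrefl_def)
  then have "wf ?S" using finite_acyclic_wf fin by blast
  then have w: "wf (lenlex ?S)" by blast
  show ?thesis
    by (rule wf_subset[OF w]) (auto intro: wl_restr)
qed

lemma tipI:
  assumes "p w \<noteq> 0" "\<And>v. p v \<noteq> 0 \<Longrightarrow> v = w \<or> word_less v w"
  shows "tip p = w"
  unfolding tip_def
proof (rule the_equality)
  show "p w \<noteq> 0 \<and> (\<forall>v. p v \<noteq> 0 \<longrightarrow> v = w \<or> word_less v w)" using assms by blast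
next
  fix w' assume "p w' \<noteq> 0 \<and> (\<forall>v. p v \<noteq> 0 \<longrightarrow> v = w' \<or> word_less v w')"
  then show "w' = w" using assms wl_asym by blast
qed


definition mw :: "sym list \<Rightarrow> sym list \<Rightarrow> 'k::field" where
  "mw w = (\<lambda>z. if z = w then 1 else 0)"

definition sm :: "'k \<Rightarrow> (sym list \<Rightarrow> 'k) \<Rightarrow> sym list \<Rightarrow> 'k::field" where
  "sm c p = (\<lambda>z. c * p z)"

definition ctx :: "sym list \<Rightarrow> (sym list \<Rightarrow> 'k::field) \<Rightarrow> sym list \<Rightarrow> sym list \<Rightarrow> 'k" where
  "ctx x p y = (\<lambda>z. if \<exists>u. z = x @ u @ y then p (THE u. z = x @ u @ y) else 0)"

lemma sum_apply: "(\<Sum>i\<in>A. f i) z = (\<Sum>i\<in>A. f i z)"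
  by (induct A rule: infinite_finite_induct) auto

lemma mw_apply: "mw w z = (if z = w then 1 else 0)" by (simp add: mw_def)
lemma sm_apply: "sm c p z = c * p z" by (simp add: sm_def)

lemma ctx_at[simp]: "ctx x p y (x @ u @ y) = p u"
  by (auto simp: ctx_def)

lemma ctx_out: "\<not> (\<exists>u. z = x @ u @ y) \<Longrightarrow> ctx x p y z = 0"
  by (auto simp: ctx_def)

lemma ctx_nz: "ctx x p y z \<noteq> 0 \<Longrightarrow> \<exists>u. z = x @ u @ y \<and> p u \<noteq> 0"
  by (cases "\<exists>u. z = x @ u @ y") (auto simp: ctx_out)

lemma ctx_add: "ctx x (p + q) y = ctx x p y + ctx x q y"
  by (rule ext) (simp add: ctx_def)

lemma ctx_diff: "ctx x (p - q) y = ctx x p y - ctx x q y"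
  by (rule ext) (simp add: ctx_def)

lemma ctx_sm: "ctx x (sm c p) y = sm c (ctx x p y)"
  by (rule ext) (simp add: ctx_def sm_apply)

lemma ctx_zero[simp]: "ctx x 0 y = 0"
  by (rule ext) (simp add: ctx_def)

lemma ctx_sum: "ctx x (\<Sum>i\<in>A. f i) y = (\<Sum>i\<in>A. ctx x (f i) y)"
proof (induct A rule: infinite_finite_induct)
  case (infinite A)
  then show ?case by (metis sum.infinite ctx_zero)
next
  case empty
  then show ?case by (metis sum.empty ctx_zero)
next
  case (insert a A)
  then show ?case by (metis sum.insert ctx_add)
qed

lemma ctx_mw: "ctx x (mw w) y = mw (x @ w @ y)"
  by (rule ext) (auto simp: ctx_def mw_apply)

lemma ctx_ctx: "ctx a (ctx x p y) b = ctx (a @ x) p (y @ b)"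
proof (rule ext)
  fix z
  show "ctx a (ctx x p y) b z = ctx (a @ x) p (y @ b) z"
  proof (cases "\<exists>u. z = a @ u @ b")
    case True
    then obtain u where u: "z = a @ u @ b" by blast
    show ?thesis
    proof (cases "\<exists>v. u = x @ v @ y")
      case True
      then obtain v where "u = x @ v @ y" by blast
      then show ?thesis using u by (metis append_assoc ctx_at)
    next
      case False
      then have "\<not> (\<exists>v. z = (a @ x) @ v @ (y @ b))" using u by auto
      then show ?thesis using u False by (simp add: ctx_out)
    qed
  next
    case False
    then have "\<not> (\<exists>v. z = (a @ x) @ v @ (y @ b))" by auto
    then show ?thesis using False by (simp add: ctx_out)
  qed
qed

lemma ctx_Nil[simp]: "ctx [] p [] = p"
  by (rule ext) (simp add: ctx_def)

lemma ctx_expand: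
  assumes "finite S" "\<And>u. p u \<noteq> 0 \<Longrightarrow> u \<in> S"
  shows "ctx x p y = (\<Sum>u\<in>S. sm (p u) (mw (x @ u @ y)))"
proof (rule ext)
  fix z
  show "ctx x p y z = (\<Sum>u\<in>S. sm (p u) (mw (x @ u @ y))) z"
  proof (cases "\<exists>u. z = x @ u @ y")
    case True
    then obtain u0 where u0: "z = x @ u0 @ y" by blast
    have "(\<Sum>u\<in>S. sm (p u) (mw (x @ u @ y))) z = (\<Sum>u\<in>S. if u = u0 then p u else 0)"
      unfolding sum_apply by (rule sum.cong) (auto simp: sm_apply mw_apply u0)
    also have "\<dots> = p u0" using assms by (auto simp: sum.delta)
    finally show ?thesis using u0 by simp
  next
    case False
    then show ?thesis by (auto simp: ctx_out sum_apply sm_apply mw_apply)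
  qed
qed

lemma sum_ind:
  assumes "finite A" "inj f"
  shows "(\<Sum>k\<in>A. if w = f k then (1::'k::field) else 0) = (if \<exists>k\<in>A. w = f k then 1 else 0)"
proof (cases "\<exists>k\<in>A. w = f k")
  case True
  then obtain k0 where k0: "k0 \<in> A" "w = f k0" by blast
  have "(\<Sum>k\<in>A. if w = f k then (1::'k) else 0) = (\<Sum>k\<in>A. if k = k0 then 1 else 0)"
    by (rule sum.cong) (use k0 assms(2) in \<open>auto dest: injD\<close>)
  also have "\<dots> = 1" using k0 assms(1) by simp
  finally show ?thesis using k0 by auto
next
  case False
  then show ?thesis by auto
qed

definition RA :: "nat \<Rightarrow> nat \<Rightarrow> nat \<Rightarrow> sym list \<Rightarrow> 'k::field" where
  "RA n j i = (\<Sum>k\<in>{1..n}. mw [U j k, Us i k]) - (if j = i then mw [] else 0)"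
definition RB :: "nat \<Rightarrow> nat \<Rightarrow> nat \<Rightarrow> sym list \<Rightarrow> 'k::field" where
  "RB n j i = (\<Sum>k\<in>{1..n}. mw [U k j, Us k i]) - (if j = i then mw [] else 0)"
definition RC :: "nat \<Rightarrow> nat \<Rightarrow> nat \<Rightarrow> sym list \<Rightarrow> 'k::field" where
  "RC n a b = (\<Sum>k\<in>{1..n}. mw [Us a k, U b k]) - (if a = b then mw [] else 0)"
definition RD :: "nat \<Rightarrow> nat \<Rightarrow> nat \<Rightarrow> sym list \<Rightarrow> 'k::field" where
  "RD n a b = (\<Sum>k\<in>{1..n}. mw [Us k a, U k b]) - (if a = b then mw [] else 0)"

lemma RA_eval: "RA n j i w = (if \<exists>k\<in>{1..n}. w = [U j k, Us i k] then 1 else 0) - (if j = i \<and> w = [] then 1 else 0)"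
  unfolding RA_def by (simp add: sum_apply mw_apply sum_ind inj_def)
lemma RB_eval: "RB n j i w = (if \<exists>k\<in>{1..n}. w = [U k j, Us k i] then 1 else 0) - (if j = i \<and> w = [] then 1 else 0)"
  unfolding RB_def by (simp add: sum_apply mw_apply sum_ind inj_def)
lemma RC_eval: "RC n a b w = (if \<exists>k\<in>{1..n}. w = [Us a k, U b k] then 1 else 0) - (if a = b \<and> w = [] then 1 else 0)"
  unfolding RC_def by (simp add: sum_apply mw_apply sum_ind inj_def)
lemma RD_eval: "RD n a b w = (if \<exists>k\<in>{1..n}. w = [Us k a, U k b] then 1 else 0) - (if a = b \<and> w = [] then 1 else 0)"
  unfolding RD_def by (simp add: sum_apply mw_apply sum_ind inj_def)

lemma RA_supp:
  assumes "1 \<le> n" "RA n j i w \<noteq> 0"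
  shows "w = [U j n, Us i n] \<or> word_less w [U j n, Us i n]"
proof -
  from assms(2) have "w = [] \<or> (\<exists>k\<in>{1..n}. w = [U j k, Us i k])" by (auto simp: RA_eval split: if_splits)
  then show ?thesis
  proof
    assume "w = []" then show ?thesis by (auto intro: wl_len)
  next
    assume "\<exists>k\<in>{1..n}. w = [U j k, Us i k]"
    then obtain k where "k \<in> {1..n}" "w = [U j k, Us i k]" by blast
    then show ?thesis by (cases "k = n") (auto intro!: wl_first simp: pair_less_def)
  qed
qed

lemma RB_supp:
  assumes "1 \<le> n" "RB n j i w \<noteq> 0"
  shows "w = [U n j, Us n i] \<or> word_less w [U n j, Us n i]"
proof -
  from assms(2) have "w = [] \<or> (\<exists>k\<in>{1..n}. w = [U k j, Us k i])" by (auto simp: RB_eval split: if_splits)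
  then show ?thesis
  proof
    assume "w = []" then show ?thesis by (auto intro: wl_len)
  next
    assume "\<exists>k\<in>{1..n}. w = [U k j, Us k i]"
    then obtain k where "k \<in> {1..n}" "w = [U k j, Us k i]" by blast
    then show ?thesis by (cases "k = n") (auto intro!: wl_first simp: pair_less_def)
  qed
qed

lemma RC_supp:
  assumes "1 \<le> n" "RC n a b w \<noteq> 0"
  shows "w = [Us a 1, U b 1] \<or> word_less w [Us a 1, U b 1]"
proof -
  from assms(2) have "w = [] \<or> (\<exists>k\<in>{1..n}. w = [Us a k, U b k])" by (auto simp: RC_eval split: if_splits)
  then show ?thesis
  proof
    assume "w = []" then show ?thesis by (auto intro: wl_len)
  next
    assume "\<exists>k\<in>{1..n}. w = [Us a k, U b k]"
    then obtain k where "k \<in> {1..n}" "w = [Us a k, U b k]" by blast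
    then show ?thesis by (cases "k = 1") (auto intro!: wl_first simp: pair_less_def)
  qed
qed

lemma RD_supp:
  assumes "1 \<le> n" "RD n a b w \<noteq> 0"
  shows "w = [Us 1 a, U 1 b] \<or> word_less w [Us 1 a, U 1 b]"
proof -
  from assms(2) have "w = [] \<or> (\<exists>k\<in>{1..n}. w = [Us k a, U k b])" by (auto simp: RD_eval split: if_splits)
  then show ?thesis
  proof
    assume "w = []" then show ?thesis by (auto intro: wl_len)
  next
    assume "\<exists>k\<in>{1..n}. w = [Us k a, U k b]"
    then obtain k where "k \<in> {1..n}" "w = [Us k a, U k b]" by blast
    then show ?thesis by (cases "k = 1") (auto intro!: wl_first simp: pair_less_def)
  qed
qed

lemma RA_top: "1 \<le> n \<Longrightarrow> RA n j i [U j n, Us i n] = 1" by (auto simp: RA_eval)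
lemma RB_top: "1 \<le> n \<Longrightarrow> RB n j i [U n j, Us n i] = 1" by (auto simp: RB_eval)
lemma RC_top: "1 \<le> n \<Longrightarrow> RC n a b [Us a 1, U b 1] = 1" by (auto simp: RC_eval)
lemma RD_top: "1 \<le> n \<Longrightarrow> RD n a b [Us 1 a, U 1 b] = 1" by (auto simp: RD_eval)

lemma RA_tip: "1 \<le> n \<Longrightarrow> tip (RA n j i) = [U j n, Us i n]"
  by (rule tipI[OF _ RA_supp]) (auto simp: RA_eval)
lemma RB_tip: "1 \<le> n \<Longrightarrow> tip (RB n j i) = [U n j, Us n i]"
  by (rule tipI[OF _ RB_supp]) (auto simp: RB_eval)
lemma RC_tip: "1 \<le> n \<Longrightarrow> tip (RC n a b) = [Us a 1, U b 1]"
  by (rule tipI[OF _ RC_supp]) (auto simp: RC_eval)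
lemma RD_tip: "1 \<le> n \<Longrightarrow> tip (RD n a b) = [Us 1 a, U 1 b]"
  by (rule tipI[OF _ RD_supp]) (auto simp: RD_eval)

lemma rr_rr: "i \<le> n \<Longrightarrow> rr n (rr n i) = i" by (auto simp: rr_def)
lemma rr_in: "i \<in> {1..n} \<Longrightarrow> rr n i \<in> {1..n}" by (auto simp: rr_def)

lemma sum_rr: "(\<Sum>s\<in>{1..n}. f (rr n s)) = (\<Sum>k\<in>{1..n}. f k)"
  by (rule sum.reindex_bij_witness[of _ "rr n" "rr n"]) (auto simp: rr_def)

lemma RA_eval2: "RA n j i w = (\<Sum>k\<in>{1..n}. if w = [U j k, Us i k] then 1 else 0) - (if j = i \<and> w = [] then 1 else 0)"
  unfolding RA_def by (simp add: sum_apply mw_apply)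
lemma RB_eval2: "RB n j i w = (\<Sum>k\<in>{1..n}. if w = [U k j, Us k i] then 1 else 0) - (if j = i \<and> w = [] then 1 else 0)"
  unfolding RB_def by (simp add: sum_apply mw_apply)

lemma rel_u: "i \<in> {1..n} \<Longrightarrow> relpoly n umat j i = RA n j i"
proof (rule ext)
  fix w assume i: "i \<in> {1..n}"
  show "relpoly n umat j i w = RA n j i w"
    unfolding RA_eval2 sum_rr[of "\<lambda>k. if w = [U j k, Us i k] then 1 else 0" n, symmetric]
    unfolding relpoly_def mat_dag_def umat_def using i by (simp add: rr_rr)
qed

lemma rel_t: "j \<in> {1..n} \<Longrightarrow> i \<in> {1..n} \<Longrightarrow> relpoly n (mat_t umat) j i = RB n j i"
proof (rule ext)
  fix w assume i: "i \<in> {1..n}" and j: "j \<in> {1..n}"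
  show "relpoly n (mat_t umat) j i w = RB n j i w"
    unfolding RB_eval2 sum_rr[of "\<lambda>k. if w = [U k j, Us k i] then 1 else 0" n, symmetric]
    unfolding relpoly_def mat_dag_def mat_t_def umat_def using i by (simp add: rr_rr)
qed

lemma rel_star: "j \<in> {1..n} \<Longrightarrow> i \<in> {1..n} \<Longrightarrow> relpoly n (mat_star n umat) j i = RC n (rr n j) (rr n i)"
proof (rule ext)
  fix w assume i: "i \<in> {1..n}" and j: "j \<in> {1..n}"
  have e: "(rr n j = rr n i) = (j = i)" using i j by (auto simp: rr_def)
  show "relpoly n (mat_star n umat) j i w = RC n (rr n j) (rr n i) w"
    using i j unfolding relpoly_def RC_def
    by (simp add: sum_apply mw_apply mat_dag_def mat_star_def umat_def rr_rr e)
qed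

lemma rel_dag: "j \<in> {1..n} \<Longrightarrow> i \<in> {1..n} \<Longrightarrow> relpoly n (mat_dag n umat) j i = RD n (rr n j) (rr n i)"
proof (rule ext)
  fix w assume i: "i \<in> {1..n}" and j: "j \<in> {1..n}"
  have e: "(rr n j = rr n i) = (j = i)" using i j by (auto simp: rr_def)
  show "relpoly n (mat_dag n umat) j i w = RD n (rr n j) (rr n i) w"
    using i j unfolding relpoly_def RD_def
    by (simp add: sum_apply mw_apply mat_dag_def umat_def rr_rr e)
qed

lemma Rset_cases:
  assumes "g \<in> Rset n"
  obtains j i where "j \<in> {1..n}" "i \<in> {1..n}" "g = RA n j i"
    | j i where "j \<in> {1..n}" "i \<in> {1..n}" "g = RB n j i"
    | j i where "j \<in> {1..n}" "i \<in> {1..n}" "g = RC n j i"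
    | j i where "j \<in> {1..n}" "i \<in> {1..n}" "g = RD n j i"
proof -
  from assms obtain v j i where v: "v \<in> Mset n" and ji: "j \<in> {1..n}" "i \<in> {1..n}"
    and g: "g = relpoly n v j i" unfolding Rset_def by blast
  have r: "rr n j \<in> {1..n}" "rr n i \<in> {1..n}" using ji by (auto simp: rr_def)
  from v show ?thesis unfolding Mset_def
  proof (elim insertE emptyE)
    assume "v = umat" then show ?thesis using that(1)[OF ji] g ji by (simp add: rel_u)
  next
    assume "v = mat_t umat" then show ?thesis using that(2)[OF ji] g ji by (simp add: rel_t)
  next
    assume "v = mat_star n umat" then show ?thesis using that(3)[OF r] g ji by (simp add: rel_star)
  next
    assume "v = mat_dag n umat" then show ?thesis using that(4)[OF r] g ji by (simp add: rel_dag)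
  qed
qed

lemma RA_in: "j \<in> {1..n} \<Longrightarrow> i \<in> {1..n} \<Longrightarrow> RA n j i \<in> Rset n"
  unfolding Rset_def Mset_def by (force simp: rel_u[symmetric])
lemma RB_in: "j \<in> {1..n} \<Longrightarrow> i \<in> {1..n} \<Longrightarrow> RB n j i \<in> Rset n"
  unfolding Rset_def Mset_def by (force simp: rel_t[symmetric])
lemma RC_in: "j \<in> {1..n} \<Longrightarrow> i \<in> {1..n} \<Longrightarrow> RC n j i \<in> Rset n"
proof -
  assume a: "j \<in> {1..n}" "i \<in> {1..n}"
  have r: "rr n j \<in> {1..n}" "rr n i \<in> {1..n}" using a by (auto simp: rr_def)
  have "j \<le> n" "i \<le> n" using a by auto
  then have "(RC n j i :: sym list \<Rightarrow> 'a) = relpoly n (mat_star n umat) (rr n j) (rr n i)"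
    by (simp add: rel_star[OF r] rr_rr)
  then show ?thesis using r unfolding Rset_def Mset_def by blast
qed
lemma RD_in: "j \<in> {1..n} \<Longrightarrow> i \<in> {1..n} \<Longrightarrow> RD n j i \<in> Rset n"
proof -
  assume a: "j \<in> {1..n}" "i \<in> {1..n}"
  have r: "rr n j \<in> {1..n}" "rr n i \<in> {1..n}" using a by (auto simp: rr_def)
  have "j \<le> n" "i \<le> n" using a by auto
  then have "(RD n j i :: sym list \<Rightarrow> 'a) = relpoly n (mat_dag n umat) (rr n j) (rr n i)"
    by (simp add: rel_dag[OF r] rr_rr)
  then show ?thesis using r unfolding Rset_def Mset_def by blast
qed


lemma U_in: "j \<in> {1..n} \<Longrightarrow> i \<in> {1..n} \<Longrightarrow> U j i \<in> Xset n"
  unfolding Xset_def by blast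
lemma Us_in: "j \<in> {1..n} \<Longrightarrow> i \<in> {1..n} \<Longrightarrow> Us j i \<in> Xset n"
  unfolding Xset_def by blast

lemma R_top:
  assumes "1 \<le> n" "g \<in> Rset n"
  shows "g (tip g) = 1"
  using assms(2)
proof (cases rule: Rset_cases)
  case (1 j i)
  then show ?thesis using RA_top[OF assms(1), of j i] assms(1)
    by (simp add: RA_tip[OF assms(1)] U_in Us_in)
next
  case (2 j i)
  then show ?thesis using RB_top[OF assms(1), of j i] assms(1)
    by (simp add: RB_tip[OF assms(1)] U_in Us_in)
next
  case (3 j i)
  then show ?thesis using RC_top[OF assms(1), of j i] assms(1)
    by (simp add: RC_tip[OF assms(1)] U_in Us_in)
next
  case (4 j i)
  then show ?thesis using RD_top[OF assms(1), of j i] assms(1)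
    by (simp add: RD_tip[OF assms(1)] U_in Us_in)
qed

lemma R_lists:
  assumes "1 \<le> n" "g \<in> Rset n"
  shows "tip g \<in> lists (Xset n)"
  using assms(2)
proof (cases rule: Rset_cases)
  case (1 j i)
  then show ?thesis using RA_top[OF assms(1), of j i] assms(1)
    by (simp add: RA_tip[OF assms(1)] U_in Us_in)
next
  case (2 j i)
  then show ?thesis using RB_top[OF assms(1), of j i] assms(1)
    by (simp add: RB_tip[OF assms(1)] U_in Us_in)
next
  case (3 j i)
  then show ?thesis using RC_top[OF assms(1), of j i] assms(1)
    by (simp add: RC_tip[OF assms(1)] U_in Us_in)
next
  case (4 j i)
  then show ?thesis using RD_top[OF assms(1), of j i] assms(1)
    by (simp add: RD_tip[OF assms(1)] U_in Us_in)
qed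

lemma R_len:
  assumes "1 \<le> n" "g \<in> Rset n"
  shows "length (tip g) = 2"
  using assms(2)
proof (cases rule: Rset_cases)
  case (1 j i)
  then show ?thesis using RA_top[OF assms(1), of j i] assms(1)
    by (simp add: RA_tip[OF assms(1)] U_in Us_in)
next
  case (2 j i)
  then show ?thesis using RB_top[OF assms(1), of j i] assms(1)
    by (simp add: RB_tip[OF assms(1)] U_in Us_in)
next
  case (3 j i)
  then show ?thesis using RC_top[OF assms(1), of j i] assms(1)
    by (simp add: RC_tip[OF assms(1)] U_in Us_in)
next
  case (4 j i)
  then show ?thesis using RD_top[OF assms(1), of j i] assms(1)
    by (simp add: RD_tip[OF assms(1)] U_in Us_in)
qed

lemma R_supp:
  assumes "1 \<le> n" "g \<in> Rset n" "g z \<noteq> 0"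
  shows "z = tip g \<or> word_less z (tip g)"
  using assms(2)
proof (cases rule: Rset_cases)
  case (1 j i)
  have nz: "(RA n j i :: sym list \<Rightarrow> 'a) z \<noteq> 0" using 1 assms(3) by simp
  have t: "tip g = tip (RA n j i :: sym list \<Rightarrow> 'a)" using 1 by simp
  show ?thesis unfolding t RA_tip[OF assms(1)] by (rule RA_supp[OF assms(1) nz])
next
  case (2 j i)
  have nz: "(RB n j i :: sym list \<Rightarrow> 'a) z \<noteq> 0" using 2 assms(3) by simp
  have t: "tip g = tip (RB n j i :: sym list \<Rightarrow> 'a)" using 2 by simp
  show ?thesis unfolding t RB_tip[OF assms(1)] by (rule RB_supp[OF assms(1) nz])
next
  case (3 j i)
  have nz: "(RC n j i :: sym list \<Rightarrow> 'a) z \<noteq> 0" using 3 assms(3) by simp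
  have t: "tip g = tip (RC n j i :: sym list \<Rightarrow> 'a)" using 3 by simp
  show ?thesis unfolding t RC_tip[OF assms(1)] by (rule RC_supp[OF assms(1) nz])
next
  case (4 j i)
  have nz: "(RD n j i :: sym list \<Rightarrow> 'a) z \<noteq> 0" using 4 assms(3) by simp
  have t: "tip g = tip (RD n j i :: sym list \<Rightarrow> 'a)" using 4 by simp
  show ?thesis unfolding t RD_tip[OF assms(1)] by (rule RD_supp[OF assms(1) nz])
qed

inductive_set Lt :: "nat \<Rightarrow> sym list \<Rightarrow> (sym list \<Rightarrow> 'k::field) set" for n W where
  Lt_zero: "0 \<in> Lt n W"
| Lt_gen: "g \<in> Rset n \<Longrightarrow> x \<in> lists (Xset n) \<Longrightarrow> y \<in> lists (Xset n) \<Longrightarrow>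
     word_less (x @ tip g @ y) W \<Longrightarrow> ctx x g y \<in> Lt n W"
| Lt_add: "p \<in> Lt n W \<Longrightarrow> q \<in> Lt n W \<Longrightarrow> p + q \<in> Lt n W"
| Lt_sm: "p \<in> Lt n W \<Longrightarrow> sm c p \<in> Lt n W"

inductive_set Le :: "nat \<Rightarrow> sym list \<Rightarrow> (sym list \<Rightarrow> 'k::field) set" for n W where
  Le_zero: "0 \<in> Le n W"
| Le_gen: "g \<in> Rset n \<Longrightarrow> x \<in> lists (Xset n) \<Longrightarrow> y \<in> lists (Xset n) \<Longrightarrow>
     x @ tip g @ y = W \<or> word_less (x @ tip g @ y) W \<Longrightarrow> ctx x g y \<in> Le n W"
| Le_add: "p \<in> Le n W \<Longrightarrow> q \<in> Le n W \<Longrightarrow> p + q \<in> Le n W"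
| Le_sm: "p \<in> Le n W \<Longrightarrow> sm c p \<in> Le n W"

lemma zero_lam: "(\<lambda>a. 0) = (0::sym list \<Rightarrow> 'k::field)" by (simp add: zero_fun_def)

lemma sm_minus: "sm (-1) p = - p" by (rule ext) (simp add: sm_apply)

lemma Lt_neg: assumes "p \<in> Lt n W" shows "- p \<in> Lt n W"
proof -
  have "sm (-1) p \<in> Lt n W" by (rule Lt_sm[OF assms])
  then show ?thesis by (simp only: sm_minus)
qed

lemma Lt_diff: assumes "p \<in> Lt n W" "q \<in> Lt n W" shows "p - q \<in> Lt n W"
proof -
  have "p + (- q) \<in> Lt n W" by (rule Lt_add[OF assms(1) Lt_neg[OF assms(2)]])
  then show ?thesis by (simp only: diff_conv_add_uminus)
qed

lemma Lt_sum: "(\<And>i. i \<in> A \<Longrightarrow> f i \<in> Lt n W) \<Longrightarrow> (\<Sum>i\<in>A. f i) \<in> Lt n W"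
proof (induct A rule: infinite_finite_induct)
  case (infinite A) then show ?case by (metis sum.infinite Lt.Lt_zero)
next
  case empty then show ?case by (metis sum.empty Lt.Lt_zero)
next
  case (insert a A) then show ?case by (metis sum.insert Lt.Lt_add insertI1 insertI2)
qed

lemma Lt_ctx:
  assumes "p \<in> Lt n V" "a \<in> lists (Xset n)" "b \<in> lists (Xset n)"
  shows "ctx a p b \<in> Lt n (a @ V @ b)"
  using assms(1)
proof induct
  case Lt_zero then show ?case by (metis ctx_zero Lt.Lt_zero)
next
  case (Lt_gen g x y)
  have "ctx a (ctx x g y) b = ctx (a @ x) g (y @ b)" by (rule ctx_ctx)
  moreover have "ctx (a @ x) g (y @ b) \<in> Lt n (a @ V @ b)"
  proof (rule Lt.Lt_gen)
    show "g \<in> Rset n" by fact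
    show "a @ x \<in> lists (Xset n)" "y @ b \<in> lists (Xset n)" using Lt_gen assms by auto
    show "word_less ((a @ x) @ tip g @ y @ b) (a @ V @ b)"
      using wl_ctx[OF Lt_gen(4), of a b] by simp
  qed
  ultimately show ?case by simp
next
  case (Lt_add p q) then show ?case by (metis ctx_add Lt.Lt_add)
next
  case (Lt_sm p c) then show ?case by (metis ctx_sm Lt.Lt_sm)
qed

lemma Lt_mono: assumes "p \<in> Lt n V" "word_less V W" shows "p \<in> Lt n W"
  using assms(1)
proof (induct rule: Lt.induct)
  case Lt_zero show ?case by (simp add: Lt.Lt_zero zero_lam)
next
  case (Lt_gen g x y) then show ?case using assms(2) by (meson Lt.Lt_gen wl_trans)
next
  case (Lt_add p q) then show ?case by (blast intro: Lt.Lt_add)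
next
  case (Lt_sm p c) then show ?case by (blast intro: Lt.Lt_sm)
qed

lemma Lt_gen': "g \<in> Rset n \<Longrightarrow> x \<in> lists (Xset n) \<Longrightarrow> y \<in> lists (Xset n) \<Longrightarrow>
     word_less (x @ tip g @ y) W \<Longrightarrow> sm c (ctx x g y) \<in> Lt n W"
  by (rule Lt_sm) (rule Lt_gen)

lemma Le_mono: assumes "p \<in> Le n V" "V = W \<or> word_less V W" shows "p \<in> Le n W"
  using assms(1)
proof (induct rule: Le.induct)
  case Le_zero show ?case by (simp add: Le.Le_zero zero_lam)
next
  case (Le_gen g x y) then show ?case using assms(2) by (meson Le.Le_gen wl_trans)
next
  case (Le_add p q) then show ?case by (blast intro: Le.Le_add)
next
  case (Le_sm p c) then show ?case by (blast intro: Le.Le_sm)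
qed

lemma Lt_supp:
  assumes "1 \<le> n" "p \<in> Lt n W" "p z \<noteq> 0" shows "word_less z W"
  using assms(2,3)
proof (induct arbitrary: z)
  case Lt_zero then show ?case by simp
next
  case (Lt_gen g x y)
  then obtain u where u: "z = x @ u @ y" "g u \<noteq> 0" using ctx_nz by blast
  then have "u = tip g \<or> word_less u (tip g)" using R_supp[OF assms(1) Lt_gen(1)] by blast
  then have "z = x @ tip g @ y \<or> word_less z (x @ tip g @ y)" using u wl_ctx[of u "tip g" x y] by blast
  then show ?case using Lt_gen(4) wl_trans by blast
next
  case (Lt_add p q) then show ?case by (metis add.left_neutral add.right_neutral plus_fun_apply)
next
  case (Lt_sm p c) then show ?case by (auto simp: sm_apply)
qed

lemma Le_supp:
  assumes "1 \<le> n" "p \<in> Le n W" "p z \<noteq> 0" shows "z = W \<or> word_less z W"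
  using assms(2,3)
proof (induct arbitrary: z)
  case Le_zero then show ?case by simp
next
  case (Le_gen g x y)
  then obtain u where u: "z = x @ u @ y" "g u \<noteq> 0" using ctx_nz by blast
  then have "u = tip g \<or> word_less u (tip g)" using R_supp[OF assms(1) Le_gen(1)] by blast
  then have "z = x @ tip g @ y \<or> word_less z (x @ tip g @ y)" using u wl_ctx[of u "tip g" x y] by blast
  then show ?case using Le_gen(4) wl_trans by blast
next
  case (Le_add p q) then show ?case by (metis add.left_neutral add.right_neutral plus_fun_apply)
next
  case (Le_sm p c) then show ?case by (auto simp: sm_apply)
qed


lemma RA_ctx: "ctx x (RA n j i) y = (\<Sum>k\<in>{1..n}. mw (x @ [U j k, Us i k] @ y)) - (if j = i then mw (x @ y) else 0)"
  by (cases "j = i") (simp_all add: RA_def ctx_diff ctx_sum ctx_mw)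
lemma RB_ctx: "ctx x (RB n j i) y = (\<Sum>k\<in>{1..n}. mw (x @ [U k j, Us k i] @ y)) - (if j = i then mw (x @ y) else 0)"
  by (cases "j = i") (simp_all add: RB_def ctx_diff ctx_sum ctx_mw)
lemma RC_ctx: "ctx x (RC n a b) y = (\<Sum>k\<in>{1..n}. mw (x @ [Us a k, U b k] @ y)) - (if a = b then mw (x @ y) else 0)"
  by (cases "a = b") (simp_all add: RC_def ctx_diff ctx_sum ctx_mw)
lemma RD_ctx: "ctx x (RD n a b) y = (\<Sum>k\<in>{1..n}. mw (x @ [Us k a, U k b] @ y)) - (if a = b then mw (x @ y) else 0)"
  by (cases "a = b") (simp_all add: RD_def ctx_diff ctx_sum ctx_mw)

lemma ov_from_identity:
  fixes F G :: "nat \<Rightarrow> sym list \<Rightarrow> 'k::field"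
  assumes "finite A" "a \<in> A" "finite B" "b \<in> B" "(\<Sum>k\<in>A. F k) = (\<Sum>l\<in>B. G l)"
    "\<And>k. k \<in> A - {a} \<Longrightarrow> F k \<in> Lt n W" "\<And>l. l \<in> B - {b} \<Longrightarrow> G l \<in> Lt n W"
  shows "F a - G b \<in> Lt n W"
proof -
  have "F a + (\<Sum>k\<in>A - {a}. F k) = G b + (\<Sum>l\<in>B - {b}. G l)"
    using assms(5) sum.remove[OF assms(1,2), of F] sum.remove[OF assms(3,4), of G] by simp
  then have "F a - G b = (\<Sum>l\<in>B - {b}. G l) - (\<Sum>k\<in>A - {a}. F k)"
    by (simp add: algebra_simps)
  moreover have "(\<Sum>l\<in>B - {b}. G l) - (\<Sum>k\<in>A - {a}. F k) \<in> Lt n W"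
    by (intro Lt_diff Lt_sum assms(6,7))
  ultimately show ?thesis by simp
qed

lemma OV1:
  assumes n: "2 \<le> n" and j: "j \<in> {1..n}" and b: "b \<in> {1..n}"
  shows "(\<lambda>k. ctx [] (RA n j k :: sym list \<Rightarrow> 'k::field) [U k b]) 1 - (\<lambda>l. ctx [U j l] (RD n l b :: sym list \<Rightarrow> 'k) []) n \<in> (Lt n [U j n, Us 1 n, U 1 b] :: (sym list \<Rightarrow> 'k::field) set)"
proof (rule ov_from_identity[where A = "{1..n}" and B = "{1..n}" and a = "1" and b = "n"
    and F = "\<lambda>k. ctx [] (RA n j k :: sym list \<Rightarrow> 'k) [U k b]" and G = "\<lambda>l. ctx [U j l] (RD n l b :: sym list \<Rightarrow> 'k) []"])
  show "finite {1..n}" "finite {1..n}" by simp_all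
  show "(1::nat) \<in> {1..n}" "(n::nat) \<in> {1..n}" using n by simp_all
  have "(\<Sum>k\<in>{1..n}. ctx [] (RA n j k :: sym list \<Rightarrow> 'k) [U k b]) =
      (\<Sum>k\<in>{1..n}. \<Sum>l\<in>{1..n}. mw [U j l, Us k l, U k b]) - (\<Sum>k\<in>{1..n}. if j = k then mw [U k b] else (0::sym list \<Rightarrow> 'k))"
    by (simp add: RA_ctx sum_subtractf)
  also have "\<dots> = (\<Sum>l\<in>{1..n}. \<Sum>k\<in>{1..n}. mw [U j l, Us k l, U k b]) - mw [U j b]"
    using assms sum.swap[of "\<lambda>k l. mw [U j l, Us k l, U k b]" "{1..n}" "{1..n}"] by simp
  also have "\<dots> = (\<Sum>l\<in>{1..n}. \<Sum>k\<in>{1..n}. mw [U j l, Us k l, U k b]) - (\<Sum>l\<in>{1..n}. if l = b then mw [U j l] else (0::sym list \<Rightarrow> 'k))"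
    using assms by simp
  also have "\<dots> = (\<Sum>l\<in>{1..n}. ctx [U j l] (RD n l b :: sym list \<Rightarrow> 'k) [])"
    by (simp add: RD_ctx sum_subtractf)
  finally show "(\<Sum>k\<in>{1..n}. ctx [] (RA n j k :: sym list \<Rightarrow> 'k) [U k b]) = (\<Sum>l\<in>{1..n}. ctx [U j l] (RD n l b :: sym list \<Rightarrow> 'k) [])" .
  fix k assume k: "k \<in> {1..n} - {1}"
  show "ctx [] (RA n j k :: sym list \<Rightarrow> 'k) [U k b] \<in> Lt n [U j n, Us 1 n, U 1 b]"
  proof (rule Lt_gen)
    show "(RA n j k :: sym list \<Rightarrow> 'k) \<in> Rset n" using assms k by (intro RA_in) auto
    show "[] \<in> lists (Xset n)" "[U k b] \<in> lists (Xset n)" using assms k by (auto intro: U_in Us_in)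
    show "word_less ([] @ tip (RA n j k :: sym list \<Rightarrow> 'k) @ [U k b]) [U j n, Us 1 n, U 1 b]"
      using assms k by (auto simp: RA_tip pair_less_def intro!: wl_second)
  qed
next
  fix l assume l: "l \<in> {1..n} - {n}"
  show "ctx [U j l] (RD n l b :: sym list \<Rightarrow> 'k) [] \<in> Lt n [U j n, Us 1 n, U 1 b]"
  proof (rule Lt_gen)
    show "(RD n l b :: sym list \<Rightarrow> 'k) \<in> Rset n" using assms l by (intro RD_in) auto
    show "[U j l] \<in> lists (Xset n)" "[] \<in> lists (Xset n)" using assms l by (auto intro: U_in Us_in)
    show "word_less ([U j l] @ tip (RD n l b :: sym list \<Rightarrow> 'k) @ []) [U j n, Us 1 n, U 1 b]"
      using assms l by (auto simp: RD_tip pair_less_def intro!: wl_first)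
  qed
qed

lemma OV2:
  assumes n: "2 \<le> n" and j: "j \<in> {1..n}" and b: "b \<in> {1..n}"
  shows "(\<lambda>k. ctx [] (RB n j k :: sym list \<Rightarrow> 'k::field) [U b k]) 1 - (\<lambda>l. ctx [U l j] (RC n l b :: sym list \<Rightarrow> 'k) []) n \<in> (Lt n [U n j, Us n 1, U b 1] :: (sym list \<Rightarrow> 'k::field) set)"
proof (rule ov_from_identity[where A = "{1..n}" and B = "{1..n}" and a = "1" and b = "n"
    and F = "\<lambda>k. ctx [] (RB n j k :: sym list \<Rightarrow> 'k) [U b k]" and G = "\<lambda>l. ctx [U l j] (RC n l b :: sym list \<Rightarrow> 'k) []"])
  show "finite {1..n}" "finite {1..n}" by simp_all
  show "(1::nat) \<in> {1..n}" "(n::nat) \<in> {1..n}" using n by simp_all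
  have "(\<Sum>k\<in>{1..n}. ctx [] (RB n j k :: sym list \<Rightarrow> 'k) [U b k]) =
      (\<Sum>k\<in>{1..n}. \<Sum>l\<in>{1..n}. mw [U l j, Us l k, U b k]) - (\<Sum>k\<in>{1..n}. if j = k then mw [U b k] else (0::sym list \<Rightarrow> 'k))"
    by (simp add: RB_ctx sum_subtractf)
  also have "\<dots> = (\<Sum>l\<in>{1..n}. \<Sum>k\<in>{1..n}. mw [U l j, Us l k, U b k]) - mw [U b j]"
    using assms sum.swap[of "\<lambda>k l. mw [U l j, Us l k, U b k]" "{1..n}" "{1..n}"] by simp
  also have "\<dots> = (\<Sum>l\<in>{1..n}. \<Sum>k\<in>{1..n}. mw [U l j, Us l k, U b k]) - (\<Sum>l\<in>{1..n}. if l = b then mw [U l j] else (0::sym list \<Rightarrow> 'k))"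
    using assms by simp
  also have "\<dots> = (\<Sum>l\<in>{1..n}. ctx [U l j] (RC n l b :: sym list \<Rightarrow> 'k) [])"
    by (simp add: RC_ctx sum_subtractf)
  finally show "(\<Sum>k\<in>{1..n}. ctx [] (RB n j k :: sym list \<Rightarrow> 'k) [U b k]) = (\<Sum>l\<in>{1..n}. ctx [U l j] (RC n l b :: sym list \<Rightarrow> 'k) [])" .
  fix k assume k: "k \<in> {1..n} - {1}"
  show "ctx [] (RB n j k :: sym list \<Rightarrow> 'k) [U b k] \<in> Lt n [U n j, Us n 1, U b 1]"
  proof (rule Lt_gen)
    show "(RB n j k :: sym list \<Rightarrow> 'k) \<in> Rset n" using assms k by (intro RB_in) auto
    show "[] \<in> lists (Xset n)" "[U b k] \<in> lists (Xset n)" using assms k by (auto intro: U_in Us_in)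
    show "word_less ([] @ tip (RB n j k :: sym list \<Rightarrow> 'k) @ [U b k]) [U n j, Us n 1, U b 1]"
      using assms k by (auto simp: RB_tip pair_less_def intro!: wl_second)
  qed
next
  fix l assume l: "l \<in> {1..n} - {n}"
  show "ctx [U l j] (RC n l b :: sym list \<Rightarrow> 'k) [] \<in> Lt n [U n j, Us n 1, U b 1]"
  proof (rule Lt_gen)
    show "(RC n l b :: sym list \<Rightarrow> 'k) \<in> Rset n" using assms l by (intro RC_in) auto
    show "[U l j] \<in> lists (Xset n)" "[] \<in> lists (Xset n)" using assms l by (auto intro: U_in Us_in)
    show "word_less ([U l j] @ tip (RC n l b :: sym list \<Rightarrow> 'k) @ []) [U n j, Us n 1, U b 1]"
      using assms l by (auto simp: RC_tip pair_less_def intro!: wl_first)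
  qed
qed

lemma OV3:
  assumes n: "2 \<le> n" and a: "a \<in> {1..n}" and i: "i \<in> {1..n}"
  shows "(\<lambda>k. ctx [] (RC n a k :: sym list \<Rightarrow> 'k::field) [Us k i]) n - (\<lambda>l. ctx [Us a l] (RB n l i :: sym list \<Rightarrow> 'k) []) 1 \<in> (Lt n [Us a 1, U n 1, Us n i] :: (sym list \<Rightarrow> 'k::field) set)"
proof (rule ov_from_identity[where A = "{1..n}" and B = "{1..n}" and a = "n" and b = "1"
    and F = "\<lambda>k. ctx [] (RC n a k :: sym list \<Rightarrow> 'k) [Us k i]" and G = "\<lambda>l. ctx [Us a l] (RB n l i :: sym list \<Rightarrow> 'k) []"])
  show "finite {1..n}" "finite {1..n}" by simp_all
  show "(n::nat) \<in> {1..n}" "(1::nat) \<in> {1..n}" using n by simp_all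
  have "(\<Sum>k\<in>{1..n}. ctx [] (RC n a k :: sym list \<Rightarrow> 'k) [Us k i]) =
      (\<Sum>k\<in>{1..n}. \<Sum>l\<in>{1..n}. mw [Us a l, U k l, Us k i]) - (\<Sum>k\<in>{1..n}. if a = k then mw [Us k i] else (0::sym list \<Rightarrow> 'k))"
    by (simp add: RC_ctx sum_subtractf)
  also have "\<dots> = (\<Sum>l\<in>{1..n}. \<Sum>k\<in>{1..n}. mw [Us a l, U k l, Us k i]) - mw [Us a i]"
    using assms sum.swap[of "\<lambda>k l. mw [Us a l, U k l, Us k i]" "{1..n}" "{1..n}"] by simp
  also have "\<dots> = (\<Sum>l\<in>{1..n}. \<Sum>k\<in>{1..n}. mw [Us a l, U k l, Us k i]) - (\<Sum>l\<in>{1..n}. if l = i then mw [Us a l] else (0::sym list \<Rightarrow> 'k))"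
    using assms by simp
  also have "\<dots> = (\<Sum>l\<in>{1..n}. ctx [Us a l] (RB n l i :: sym list \<Rightarrow> 'k) [])"
    by (simp add: RB_ctx sum_subtractf)
  finally show "(\<Sum>k\<in>{1..n}. ctx [] (RC n a k :: sym list \<Rightarrow> 'k) [Us k i]) = (\<Sum>l\<in>{1..n}. ctx [Us a l] (RB n l i :: sym list \<Rightarrow> 'k) [])" .
  fix k assume k: "k \<in> {1..n} - {n}"
  show "ctx [] (RC n a k :: sym list \<Rightarrow> 'k) [Us k i] \<in> Lt n [Us a 1, U n 1, Us n i]"
  proof (rule Lt_gen)
    show "(RC n a k :: sym list \<Rightarrow> 'k) \<in> Rset n" using assms k by (intro RC_in) auto
    show "[] \<in> lists (Xset n)" "[Us k i] \<in> lists (Xset n)" using assms k by (auto intro: U_in Us_in)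
    show "word_less ([] @ tip (RC n a k :: sym list \<Rightarrow> 'k) @ [Us k i]) [Us a 1, U n 1, Us n i]"
      using assms k by (auto simp: RC_tip pair_less_def intro!: wl_second)
  qed
next
  fix l assume l: "l \<in> {1..n} - {1}"
  show "ctx [Us a l] (RB n l i :: sym list \<Rightarrow> 'k) [] \<in> Lt n [Us a 1, U n 1, Us n i]"
  proof (rule Lt_gen)
    show "(RB n l i :: sym list \<Rightarrow> 'k) \<in> Rset n" using assms l by (intro RB_in) auto
    show "[Us a l] \<in> lists (Xset n)" "[] \<in> lists (Xset n)" using assms l by (auto intro: U_in Us_in)
    show "word_less ([Us a l] @ tip (RB n l i :: sym list \<Rightarrow> 'k) @ []) [Us a 1, U n 1, Us n i]"
      using assms l by (auto simp: RB_tip pair_less_def intro!: wl_first)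
  qed
qed

lemma OV4:
  assumes n: "2 \<le> n" and a: "a \<in> {1..n}" and i: "i \<in> {1..n}"
  shows "(\<lambda>k. ctx [] (RD n a k :: sym list \<Rightarrow> 'k::field) [Us i k]) n - (\<lambda>l. ctx [Us l a] (RA n l i :: sym list \<Rightarrow> 'k) []) 1 \<in> (Lt n [Us 1 a, U 1 n, Us i n] :: (sym list \<Rightarrow> 'k::field) set)"
proof (rule ov_from_identity[where A = "{1..n}" and B = "{1..n}" and a = "n" and b = "1"
    and F = "\<lambda>k. ctx [] (RD n a k :: sym list \<Rightarrow> 'k) [Us i k]" and G = "\<lambda>l. ctx [Us l a] (RA n l i :: sym list \<Rightarrow> 'k) []"])
  show "finite {1..n}" "finite {1..n}" by simp_all
  show "(n::nat) \<in> {1..n}" "(1::nat) \<in> {1..n}" using n by simp_all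
  have "(\<Sum>k\<in>{1..n}. ctx [] (RD n a k :: sym list \<Rightarrow> 'k) [Us i k]) =
      (\<Sum>k\<in>{1..n}. \<Sum>l\<in>{1..n}. mw [Us l a, U l k, Us i k]) - (\<Sum>k\<in>{1..n}. if a = k then mw [Us i k] else (0::sym list \<Rightarrow> 'k))"
    by (simp add: RD_ctx sum_subtractf)
  also have "\<dots> = (\<Sum>l\<in>{1..n}. \<Sum>k\<in>{1..n}. mw [Us l a, U l k, Us i k]) - mw [Us i a]"
    using assms sum.swap[of "\<lambda>k l. mw [Us l a, U l k, Us i k]" "{1..n}" "{1..n}"] by simp
  also have "\<dots> = (\<Sum>l\<in>{1..n}. \<Sum>k\<in>{1..n}. mw [Us l a, U l k, Us i k]) - (\<Sum>l\<in>{1..n}. if l = i then mw [Us l a] else (0::sym list \<Rightarrow> 'k))"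
    using assms by simp
  also have "\<dots> = (\<Sum>l\<in>{1..n}. ctx [Us l a] (RA n l i :: sym list \<Rightarrow> 'k) [])"
    by (simp add: RA_ctx sum_subtractf)
  finally show "(\<Sum>k\<in>{1..n}. ctx [] (RD n a k :: sym list \<Rightarrow> 'k) [Us i k]) = (\<Sum>l\<in>{1..n}. ctx [Us l a] (RA n l i :: sym list \<Rightarrow> 'k) [])" .
  fix k assume k: "k \<in> {1..n} - {n}"
  show "ctx [] (RD n a k :: sym list \<Rightarrow> 'k) [Us i k] \<in> Lt n [Us 1 a, U 1 n, Us i n]"
  proof (rule Lt_gen)
    show "(RD n a k :: sym list \<Rightarrow> 'k) \<in> Rset n" using assms k by (intro RD_in) auto
    show "[] \<in> lists (Xset n)" "[Us i k] \<in> lists (Xset n)" using assms k by (auto intro: U_in Us_in)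
    show "word_less ([] @ tip (RD n a k :: sym list \<Rightarrow> 'k) @ [Us i k]) [Us 1 a, U 1 n, Us i n]"
      using assms k by (auto simp: RD_tip pair_less_def intro!: wl_second)
  qed
next
  fix l assume l: "l \<in> {1..n} - {1}"
  show "ctx [Us l a] (RA n l i :: sym list \<Rightarrow> 'k) [] \<in> Lt n [Us 1 a, U 1 n, Us i n]"
  proof (rule Lt_gen)
    show "(RA n l i :: sym list \<Rightarrow> 'k) \<in> Rset n" using assms l by (intro RA_in) auto
    show "[Us l a] \<in> lists (Xset n)" "[] \<in> lists (Xset n)" using assms l by (auto intro: U_in Us_in)
    show "word_less ([Us l a] @ tip (RA n l i :: sym list \<Rightarrow> 'k) @ []) [Us 1 a, U 1 n, Us i n]"
      using assms l by (auto simp: RA_tip pair_less_def intro!: wl_first)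
  qed
qed

lemma INC1:
  assumes n: "2 \<le> n" 
  shows "(\<lambda>k. ctx [] (RA n k k :: sym list \<Rightarrow> 'k::field) []) n - (\<lambda>l. ctx [] (RB n l l :: sym list \<Rightarrow> 'k) []) n \<in> (Lt n [U n n, Us n n] :: (sym list \<Rightarrow> 'k::field) set)"
proof (rule ov_from_identity[where A = "{1..n}" and B = "{1..n}" and a = "n" and b = "n"
    and F = "\<lambda>k. ctx [] (RA n k k :: sym list \<Rightarrow> 'k) []" and G = "\<lambda>l. ctx [] (RB n l l :: sym list \<Rightarrow> 'k) []"])
  show "finite {1..n}" "finite {1..n}" by simp_all
  show "(n::nat) \<in> {1..n}" "(n::nat) \<in> {1..n}" using n by simp_all
  have "(\<Sum>k\<in>{1..n}. ctx [] (RA n k k :: sym list \<Rightarrow> 'k) []) =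
      (\<Sum>k\<in>{1..n}. \<Sum>l\<in>{1..n}. mw [U k l, Us k l]) - (\<Sum>k\<in>{1..n}. mw [] :: sym list \<Rightarrow> 'k)"
    by (simp add: RA_ctx sum_subtractf)
  also have "\<dots> = (\<Sum>l\<in>{1..n}. \<Sum>k\<in>{1..n}. mw [U k l, Us k l]) - (\<Sum>l\<in>{1..n}. mw [] :: sym list \<Rightarrow> 'k)"
    using sum.swap[of "\<lambda>k l. mw [U k l, Us k l]" "{1..n}" "{1..n}"] by simp
  also have "\<dots> = (\<Sum>l\<in>{1..n}. ctx [] (RB n l l :: sym list \<Rightarrow> 'k) [])"
    by (simp add: RB_ctx sum_subtractf)
  finally show "(\<Sum>k\<in>{1..n}. ctx [] (RA n k k :: sym list \<Rightarrow> 'k) []) = (\<Sum>l\<in>{1..n}. ctx [] (RB n l l :: sym list \<Rightarrow> 'k) [])" .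
  fix k assume k: "k \<in> {1..n} - {n}"
  show "ctx [] (RA n k k :: sym list \<Rightarrow> 'k) [] \<in> Lt n [U n n, Us n n]"
  proof (rule Lt_gen)
    show "(RA n k k :: sym list \<Rightarrow> 'k) \<in> Rset n" using assms k by (intro RA_in) auto
    show "[] \<in> lists (Xset n)" "[] \<in> lists (Xset n)" using assms k by (auto intro: U_in Us_in)
    show "word_less ([] @ tip (RA n k k :: sym list \<Rightarrow> 'k) @ []) [U n n, Us n n]"
      using assms k by (auto simp: RA_tip pair_less_def intro!: wl_first)
  qed
next
  fix l assume l: "l \<in> {1..n} - {n}"
  show "ctx [] (RB n l l :: sym list \<Rightarrow> 'k) [] \<in> Lt n [U n n, Us n n]"
  proof (rule Lt_gen)
    show "(RB n l l :: sym list \<Rightarrow> 'k) \<in> Rset n" using assms l by (intro RB_in) auto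
    show "[] \<in> lists (Xset n)" "[] \<in> lists (Xset n)" using assms l by (auto intro: U_in Us_in)
    show "word_less ([] @ tip (RB n l l :: sym list \<Rightarrow> 'k) @ []) [U n n, Us n n]"
      using assms l by (auto simp: RB_tip pair_less_def intro!: wl_first)
  qed
qed

lemma INC2:
  assumes n: "2 \<le> n" 
  shows "(\<lambda>k. ctx [] (RC n k k :: sym list \<Rightarrow> 'k::field) []) 1 - (\<lambda>l. ctx [] (RD n l l :: sym list \<Rightarrow> 'k) []) 1 \<in> (Lt n [Us 1 1, U 1 1] :: (sym list \<Rightarrow> 'k::field) set)"
proof (rule ov_from_identity[where A = "{1..n}" and B = "{1..n}" and a = "1" and b = "1"
    and F = "\<lambda>k. ctx [] (RC n k k :: sym list \<Rightarrow> 'k) []" and G = "\<lambda>l. ctx [] (RD n l l :: sym list \<Rightarrow> 'k) []"])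
  show "finite {1..n}" "finite {1..n}" by simp_all
  show "(1::nat) \<in> {1..n}" "(1::nat) \<in> {1..n}" using n by simp_all
  have "(\<Sum>k\<in>{1..n}. ctx [] (RC n k k :: sym list \<Rightarrow> 'k) []) =
      (\<Sum>k\<in>{1..n}. \<Sum>l\<in>{1..n}. mw [Us k l, U k l]) - (\<Sum>k\<in>{1..n}. mw [] :: sym list \<Rightarrow> 'k)"
    by (simp add: RC_ctx sum_subtractf)
  also have "\<dots> = (\<Sum>l\<in>{1..n}. \<Sum>k\<in>{1..n}. mw [Us k l, U k l]) - (\<Sum>l\<in>{1..n}. mw [] :: sym list \<Rightarrow> 'k)"
    using sum.swap[of "\<lambda>k l. mw [Us k l, U k l]" "{1..n}" "{1..n}"] by simp
  also have "\<dots> = (\<Sum>l\<in>{1..n}. ctx [] (RD n l l :: sym list \<Rightarrow> 'k) [])"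
    by (simp add: RD_ctx sum_subtractf)
  finally show "(\<Sum>k\<in>{1..n}. ctx [] (RC n k k :: sym list \<Rightarrow> 'k) []) = (\<Sum>l\<in>{1..n}. ctx [] (RD n l l :: sym list \<Rightarrow> 'k) [])" .
  fix k assume k: "k \<in> {1..n} - {1}"
  show "ctx [] (RC n k k :: sym list \<Rightarrow> 'k) [] \<in> Lt n [Us 1 1, U 1 1]"
  proof (rule Lt_gen)
    show "(RC n k k :: sym list \<Rightarrow> 'k) \<in> Rset n" using assms k by (intro RC_in) auto
    show "[] \<in> lists (Xset n)" "[] \<in> lists (Xset n)" using assms k by (auto intro: U_in Us_in)
    show "word_less ([] @ tip (RC n k k :: sym list \<Rightarrow> 'k) @ []) [Us 1 1, U 1 1]"
      using assms k by (auto simp: RC_tip pair_less_def intro!: wl_first)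
  qed
next
  fix l assume l: "l \<in> {1..n} - {1}"
  show "ctx [] (RD n l l :: sym list \<Rightarrow> 'k) [] \<in> Lt n [Us 1 1, U 1 1]"
  proof (rule Lt_gen)
    show "(RD n l l :: sym list \<Rightarrow> 'k) \<in> Rset n" using assms l by (intro RD_in) auto
    show "[] \<in> lists (Xset n)" "[] \<in> lists (Xset n)" using assms l by (auto intro: U_in Us_in)
    show "word_less ([] @ tip (RD n l l :: sym list \<Rightarrow> 'k) @ []) [Us 1 1, U 1 1]"
      using assms l by (auto simp: RD_tip pair_less_def intro!: wl_first)
  qed
qed


lemma Lt_eqI: "p \<in> Lt n W \<Longrightarrow> p = q \<Longrightarrow> W = W' \<Longrightarrow> q \<in> Lt n W'"
  by simp

lemma Lt_eqI_neg: "p \<in> Lt n W \<Longrightarrow> q = - p \<Longrightarrow> W = W' \<Longrightarrow> q \<in> Lt n W'"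
  using Lt_neg by simp

lemma RA_supp_set: "{u. (RA n j i :: sym list \<Rightarrow> 'k::field) u \<noteq> 0} \<subseteq> insert [] ((\<lambda>k. [U j k, Us i k]) ` {1..n})"
  by (auto simp: RA_eval split: if_splits)

lemma RB_supp_set: "{u. (RB n j i :: sym list \<Rightarrow> 'k::field) u \<noteq> 0} \<subseteq> insert [] ((\<lambda>k. [U k j, Us k i]) ` {1..n})"
  by (auto simp: RB_eval split: if_splits)

lemma RC_supp_set: "{u. (RC n j i :: sym list \<Rightarrow> 'k::field) u \<noteq> 0} \<subseteq> insert [] ((\<lambda>k. [Us j k, U i k]) ` {1..n})"
  by (auto simp: RC_eval split: if_splits)

lemma RD_supp_set: "{u. (RD n j i :: sym list \<Rightarrow> 'k::field) u \<noteq> 0} \<subseteq> insert [] ((\<lambda>k. [Us k j, U k i]) ` {1..n})"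
  by (auto simp: RD_eval split: if_splits)

lemma R_fin: assumes "g \<in> Rset n" shows "finite {u. g u \<noteq> 0}"
  using assms
proof (cases rule: Rset_cases)
  case (1 j i) then show ?thesis using finite_subset[OF RA_supp_set] by auto
next
  case (2 j i) then show ?thesis using finite_subset[OF RB_supp_set] by auto
next
  case (3 j i) then show ?thesis using finite_subset[OF RC_supp_set] by auto
next
  case (4 j i) then show ?thesis using finite_subset[OF RD_supp_set] by auto
qed

lemma R_supp_lists: assumes "g \<in> Rset n" "g u \<noteq> 0" shows "u \<in> lists (Xset n)"
  using assms(1)
proof (cases rule: Rset_cases)
  case (1 j i)
  then have "u \<in> insert [] ((\<lambda>k. [U j k, Us i k]) ` {1..n})" using RA_supp_set assms(2) by blast
  then consider "u = []" | k where "k \<in> {1..n}" "u = [U j k, Us i k]" by blast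
  then show ?thesis
  proof cases
    case 1 then show ?thesis by simp
  next
    case 2 then show ?thesis using \<open>j \<in> {1..n}\<close> \<open>i \<in> {1..n}\<close> by (simp add: U_in Us_in)
  qed
next
  case (2 j i)
  then have "u \<in> insert [] ((\<lambda>k. [U k j, Us k i]) ` {1..n})" using RB_supp_set assms(2) by blast
  then consider "u = []" | k where "k \<in> {1..n}" "u = [U k j, Us k i]" by blast
  then show ?thesis
  proof cases
    case 1 then show ?thesis by simp
  next
    case 2 then show ?thesis using \<open>j \<in> {1..n}\<close> \<open>i \<in> {1..n}\<close> by (simp add: U_in Us_in)
  qed
next
  case (3 j i)
  then have "u \<in> insert [] ((\<lambda>k. [Us j k, U i k]) ` {1..n})" using RC_supp_set assms(2) by blast
  then consider "u = []" | k where "k \<in> {1..n}" "u = [Us j k, U i k]" by blast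
  then show ?thesis
  proof cases
    case 1 then show ?thesis by simp
  next
    case 2 then show ?thesis using \<open>j \<in> {1..n}\<close> \<open>i \<in> {1..n}\<close> by (simp add: U_in Us_in)
  qed
next
  case (4 j i)
  then have "u \<in> insert [] ((\<lambda>k. [Us k j, U k i]) ` {1..n})" using RD_supp_set assms(2) by blast
  then consider "u = []" | k where "k \<in> {1..n}" "u = [Us k j, U k i]" by blast
  then show ?thesis
  proof cases
    case 1 then show ?thesis by simp
  next
    case 2 then show ?thesis using \<open>j \<in> {1..n}\<close> \<open>i \<in> {1..n}\<close> by (simp add: U_in Us_in)
  qed
qed

lemma sm_sum: "sm c (\<Sum>i\<in>A. f i) = (\<Sum>i\<in>A. sm c (f i))"
  by (rule ext) (simp add: sm_apply sum_apply sum_distrib_left)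

lemma sm_one: "sm 1 p = p" by (rule ext) (simp add: sm_apply)
lemma sm_sm: "sm a (sm b p) = sm (a * b) p" by (rule ext) (simp add: sm_apply)

lemma ov_gen:
  fixes F :: "'i \<Rightarrow> sym list \<Rightarrow> 'k::field" and G :: "'j \<Rightarrow> sym list \<Rightarrow> 'k"
  assumes "finite A" "a \<in> A" "finite B" "b \<in> B" "(\<Sum>k\<in>A. F k) = (\<Sum>l\<in>B. G l)"
    "\<And>k. k \<in> A - {a} \<Longrightarrow> F k \<in> Lt n W" "\<And>l. l \<in> B - {b} \<Longrightarrow> G l \<in> Lt n W"
  shows "F a - G b \<in> Lt n W"
proof -
  have "F a + (\<Sum>k\<in>A - {a}. F k) = G b + (\<Sum>l\<in>B - {b}. G l)"
    using assms(5) sum.remove[OF assms(1,2), of F] sum.remove[OF assms(3,4), of G] by simp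
  then have "F a - G b = (\<Sum>l\<in>B - {b}. G l) - (\<Sum>k\<in>A - {a}. F k)"
    by (simp add: algebra_simps)
  moreover have "(\<Sum>l\<in>B - {b}. G l) - (\<Sum>k\<in>A - {a}. F k) \<in> Lt n W"
    by (intro Lt_diff Lt_sum assms(6,7))
  ultimately show ?thesis by simp
qed

lemma DISJ:
  fixes g1 g2 :: "sym list \<Rightarrow> 'k::field"
  assumes n1: "1 \<le> n" and g1: "g1 \<in> Rset n" and g2: "g2 \<in> Rset n"
    and x1: "x1 \<in> lists (Xset n)" and m: "m \<in> lists (Xset n)" and y2: "y2 \<in> lists (Xset n)"
  shows "ctx x1 g1 (m @ tip g2 @ y2) - ctx (x1 @ tip g1 @ m) g2 y2 \<in> Lt n (x1 @ tip g1 @ m @ tip g2 @ y2)"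
proof -
  let ?S1 = "{u. g1 u \<noteq> 0}" and ?S2 = "{u. g2 u \<noteq> 0}"
  let ?t1 = "tip g1" and ?t2 = "tip g2"
  let ?W = "x1 @ tip g1 @ m @ tip g2 @ y2"
  have f1: "finite ?S1" and f2: "finite ?S2" using R_fin g1 g2 by blast+
  have t1: "?t1 \<in> ?S1" and t2: "?t2 \<in> ?S2" using R_top[OF n1 g1] R_top[OF n1 g2] by simp_all
  have "(\<Sum>w\<in>?S2. sm (g2 w) (ctx x1 g1 (m @ w @ y2)))
      = (\<Sum>w\<in>?S2. \<Sum>u\<in>?S1. sm (g2 w * g1 u) (mw (x1 @ u @ m @ w @ y2)))"
    by (simp add: ctx_expand[OF f1] sm_sum sm_sm)
  also have "\<dots> = (\<Sum>u\<in>?S1. \<Sum>w\<in>?S2. sm (g2 w * g1 u) (mw (x1 @ u @ m @ w @ y2)))"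
    by (rule sum.swap)
  also have "\<dots> = (\<Sum>u\<in>?S1. sm (g1 u) (ctx (x1 @ u @ m) g2 y2))"
    by (simp add: ctx_expand[OF f2] sm_sum sm_sm mult.commute)
  finally have eq: "(\<Sum>w\<in>?S2. sm (g2 w) (ctx x1 g1 (m @ w @ y2))) = (\<Sum>u\<in>?S1. sm (g1 u) (ctx (x1 @ u @ m) g2 y2))" .
  have "(\<lambda>w. sm (g2 w) (ctx x1 g1 (m @ w @ y2))) ?t2 - (\<lambda>u. sm (g1 u) (ctx (x1 @ u @ m) g2 y2)) ?t1 \<in> Lt n ?W"
  proof (rule ov_gen[OF f2 t2 f1 t1 eq])
    fix w assume w: "w \<in> ?S2 - {?t2}"
    then have "word_less w ?t2" using R_supp[OF n1 g2] by blast
    then have "word_less (x1 @ ?t1 @ m @ w @ y2) ?W" using wl_ctx[of w ?t2 "x1 @ ?t1 @ m" y2] by simp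
    moreover have "m @ w @ y2 \<in> lists (Xset n)" using m y2 w R_supp_lists[OF g2] by auto
    ultimately show "sm (g2 w) (ctx x1 g1 (m @ w @ y2)) \<in> Lt n ?W"
      using g1 x1 by (intro Lt_sm Lt_gen) auto
  next
    fix u assume u: "u \<in> ?S1 - {?t1}"
    then have "word_less u ?t1" using R_supp[OF n1 g1] by blast
    then have "word_less ((x1 @ u @ m) @ ?t2 @ y2) ?W" using wl_ctx[of u ?t1 x1 "m @ ?t2 @ y2"] by simp
    moreover have "x1 @ u @ m \<in> lists (Xset n)" using m x1 u R_supp_lists[OF g1] by auto
    ultimately show "sm (g1 u) (ctx (x1 @ u @ m) g2 y2) \<in> Lt n ?W"
      using g2 y2 by (intro Lt_sm Lt_gen) auto
  qed
  then show ?thesis using R_top[OF n1 g1] R_top[OF n1 g2] by (simp add: sm_one)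
qed


lemma INCL:
  fixes g1 g2 :: "sym list \<Rightarrow> 'k::field"
  assumes n: "2 \<le> n" and g1: "g1 \<in> Rset n" and g2: "g2 \<in> Rset n" and t: "tip g1 = tip g2"
  shows "g1 - g2 \<in> Lt n (tip g1)"
proof -
  have n1: "1 \<le> n" using n by simp
  have nn: "n \<in> {1..n}" using n by simp
  have Z: "g1 = g2 \<Longrightarrow> ?thesis" by (simp add: Lt.Lt_zero)
  show ?thesis using g1
  proof (cases rule: Rset_cases)
    case (1 j i) note c1 = this
    have h1: "tip g1 = [U j n, Us i n]" using c1 by (simp add: RA_tip n1)
    show ?thesis using g2
    proof (cases rule: Rset_cases)
      case (1 j' i') then show ?thesis using c1 t h1 Z by (simp add: RA_tip n1)
    next
      case (2 j' i')
      then have "j = n" "i = n" "j' = n" "i' = n" using t h1 by (simp_all add: RB_tip n1)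
      then show ?thesis using c1 2 h1 by (intro Lt_eqI[OF INC1[OF n]]) simp_all
    next
      case (3 j' i') then show ?thesis using t h1 by (simp add: RC_tip n1)
    next
      case (4 j' i') then show ?thesis using t h1 by (simp add: RD_tip n1)
    qed
  next
    case (2 j i) note c1 = this
    have h1: "tip g1 = [U n j, Us n i]" using c1 by (simp add: RB_tip n1)
    show ?thesis using g2
    proof (cases rule: Rset_cases)
      case (1 j' i')
      then have "j = n" "i = n" "j' = n" "i' = n" using t h1 by (simp_all add: RA_tip n1)
      then show ?thesis using c1 1 h1 by (intro Lt_eqI_neg[OF INC1[OF n]]) simp_all
    next
      case (2 j' i') then show ?thesis using c1 t h1 Z by (simp add: RB_tip n1)
    next
      case (3 j' i') then show ?thesis using t h1 by (simp add: RC_tip n1)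
    next
      case (4 j' i') then show ?thesis using t h1 by (simp add: RD_tip n1)
    qed
  next
    case (3 j i) note c1 = this
    have h1: "tip g1 = [Us j 1, U i 1]" using c1 by (simp add: RC_tip n1)
    show ?thesis using g2
    proof (cases rule: Rset_cases)
      case (1 j' i') then show ?thesis using t h1 by (simp add: RA_tip n1)
    next
      case (2 j' i') then show ?thesis using t h1 by (simp add: RB_tip n1)
    next
      case (3 j' i') then show ?thesis using c1 t h1 Z by (simp add: RC_tip n1)
    next
      case (4 j' i')
      then have "j = 1" "i = 1" "j' = 1" "i' = 1" using t h1 by (simp_all add: RD_tip n1)
      then show ?thesis using c1 4 h1 by (intro Lt_eqI[OF INC2[OF n]]) simp_all
    qed
  next
    case (4 j i) note c1 = this
    have h1: "tip g1 = [Us 1 j, U 1 i]" using c1 by (simp add: RD_tip n1)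
    show ?thesis using g2
    proof (cases rule: Rset_cases)
      case (1 j' i') then show ?thesis using t h1 by (simp add: RA_tip n1)
    next
      case (2 j' i') then show ?thesis using t h1 by (simp add: RB_tip n1)
    next
      case (3 j' i')
      then have "j = 1" "i = 1" "j' = 1" "i' = 1" using t h1 by (simp_all add: RC_tip n1)
      then show ?thesis using c1 3 h1 by (intro Lt_eqI_neg[OF INC2[OF n]]) simp_all
    next
      case (4 j' i') then show ?thesis using c1 t h1 Z by (simp add: RD_tip n1)
    qed
  qed
qed

lemma OVL:
  fixes g1 g2 :: "sym list \<Rightarrow> 'k::field"
  assumes n: "2 \<le> n" and g1: "g1 \<in> Rset n" and g2: "g2 \<in> Rset n"
    and t1: "tip g1 = [p, q]" and t2: "tip g2 = [q, r]"
  shows "ctx [] g1 [r] - ctx [p] g2 [] \<in> Lt n [p, q, r]"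
proof -
  have n1: "1 \<le> n" using n by simp
  have nn: "n \<noteq> 1" using n by simp
  show ?thesis using g1
  proof (cases rule: Rset_cases)
    case (1 j i) note c1 = this
    have h1: "p = U j n" "q = Us i n" using c1 t1 by (simp_all add: RA_tip n1)
    show ?thesis using g2
    proof (cases rule: Rset_cases)
      case (1 j' i') then show ?thesis using t2 h1 by (simp add: RA_tip n1)
    next
      case (2 j' i') then show ?thesis using t2 h1 by (simp add: RB_tip n1)
    next
      case (3 j' i') then show ?thesis using t2 h1 nn by (simp add: RC_tip n1)
    next
      case (4 a b)
      then have e: "[Us 1 a, U 1 b] = [q, r]" using t2 by (simp add: RD_tip n1)
      then have "r = U 1 b" by simp
      moreover have "i = 1" "a = n" using e h1 by simp_all
      ultimately have "i = 1" "a = n" "r = U 1 b" by simp_all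
      then show ?thesis using c1 4 h1 by (intro Lt_eqI[OF OV1[OF n c1(1) 4(2)]]) simp_all
    qed
  next
    case (2 j i) note c1 = this
    have h1: "p = U n j" "q = Us n i" using c1 t1 by (simp_all add: RB_tip n1)
    show ?thesis using g2
    proof (cases rule: Rset_cases)
      case (1 j' i') then show ?thesis using t2 h1 by (simp add: RA_tip n1)
    next
      case (2 j' i') then show ?thesis using t2 h1 by (simp add: RB_tip n1)
    next
      case (3 a b)
      then have e: "[Us a 1, U b 1] = [q, r]" using t2 by (simp add: RC_tip n1)
      then have "r = U b 1" by simp
      moreover have "i = 1" "a = n" using e h1 by simp_all
      ultimately have "i = 1" "a = n" "r = U b 1" by simp_all
      then show ?thesis using c1 3 h1 by (intro Lt_eqI[OF OV2[OF n c1(1) 3(2)]]) simp_all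
    next
      case (4 a b) then show ?thesis using t2 h1 nn by (simp add: RD_tip n1)
    qed
  next
    case (3 a b) note c1 = this
    have h1: "p = Us a 1" "q = U b 1" using c1 t1 by (simp_all add: RC_tip n1)
    show ?thesis using g2
    proof (cases rule: Rset_cases)
      case (1 j' i') then show ?thesis using t2 h1 nn by (simp add: RA_tip n1)
    next
      case (2 j i)
      then have e: "[U n j, Us n i] = [q, r]" using t2 by (simp add: RB_tip n1)
      then have "r = Us n i" by simp
      moreover have "b = n" "j = 1" using e h1 by simp_all
      ultimately have "b = n" "j = 1" "r = Us n i" by simp_all
      then show ?thesis using c1 2 h1 by (intro Lt_eqI[OF OV3[OF n c1(1) 2(2)]]) simp_all
    next
      case (3 j' i') then show ?thesis using t2 h1 by (simp add: RC_tip n1)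
    next
      case (4 j' i') then show ?thesis using t2 h1 by (simp add: RD_tip n1)
    qed
  next
    case (4 a b) note c1 = this
    have h1: "p = Us 1 a" "q = U 1 b" using c1 t1 by (simp_all add: RD_tip n1)
    show ?thesis using g2
    proof (cases rule: Rset_cases)
      case (1 j i)
      then have e: "[U j n, Us i n] = [q, r]" using t2 by (simp add: RA_tip n1)
      then have "r = Us i n" by simp
      moreover have "b = n" "j = 1" using e h1 by simp_all
      ultimately have "b = n" "j = 1" "r = Us i n" by simp_all
      then show ?thesis using c1 1 h1 by (intro Lt_eqI[OF OV4[OF n c1(1) 1(2)]]) simp_all
    next
      case (2 j' i') then show ?thesis using t2 h1 nn by (simp add: RB_tip n1)
    next
      case (3 j' i') then show ?thesis using t2 h1 by (simp add: RC_tip n1)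
    next
      case (4 j' i') then show ?thesis using t2 h1 by (simp add: RD_tip n1)
    qed
  qed
qed

lemma len2: "length t = 2 \<Longrightarrow> \<exists>a b. t = [a, b]"
  by (auto simp: numeral_2_eq_2 length_Suc_conv)

lemma split3:
  assumes eq: "x1 @ t1 @ y1 = x2 @ t2 @ y2" and l1: "length t1 = 2" and l2: "length t2 = 2"
    and le: "length x1 \<le> length x2"
  obtains (same) "x2 = x1" "t2 = t1" "y2 = y1"
    | (ovl) a b c where "t1 = [a, b]" "t2 = [b, c]" "x2 = x1 @ [a]" "y1 = c # y2"
    | (disj) m where "x2 = x1 @ t1 @ m" "y1 = m @ t2 @ y2"
proof -
  define r where "r = drop (length x1) x2"
  have "take (length x1) (x1 @ t1 @ y1) = take (length x1) (x2 @ t2 @ y2)" using eq by simp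
  then have "x1 = take (length x1) x2" using le by simp
  then have x2: "x2 = x1 @ r" unfolding r_def by (metis append_take_drop_id)
  have rest: "t1 @ y1 = r @ t2 @ y2" using eq x2 by simp
  obtain a b where t1: "t1 = [a, b]" using len2[OF l1] by blast
  obtain b' c where t2: "t2 = [b', c]" using len2[OF l2] by blast
  consider "r = []" | a' where "r = [a']" | a' b'' m where "r = a' # b'' # m"
    by (metis list.exhaust)
  then show ?thesis
  proof cases
    case 1
    then show ?thesis using rest x2 t1 t2 same by simp
  next
    case (2 a')
    then have "a = a'" "b = b'" "y1 = c # y2" using rest t1 t2 by simp_all
    then show ?thesis using ovl[of a b c] t1 t2 x2 2 by simp
  next
    case (3 a' b'' m)
    then have "a = a'" "b = b''" "y1 = m @ t2 @ y2" using rest t1 t2 by simp_all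
    then show ?thesis using disj[of m] t1 x2 3 by simp
  qed
qed

lemma KEY_le:
  fixes g1 g2 :: "sym list \<Rightarrow> 'k::field"
  assumes n: "2 \<le> n" and g1: "g1 \<in> Rset n" and g2: "g2 \<in> Rset n"
    and x1: "x1 \<in> lists (Xset n)" and y1: "y1 \<in> lists (Xset n)"
    and x2: "x2 \<in> lists (Xset n)" and y2: "y2 \<in> lists (Xset n)"
    and eq: "x1 @ tip g1 @ y1 = x2 @ tip g2 @ y2" and le: "length x1 \<le> length x2"
  shows "ctx x1 g1 y1 - ctx x2 g2 y2 \<in> Lt n (x1 @ tip g1 @ y1)"
proof -
  have n1: "1 \<le> n" using n by simp
  from eq R_len[OF n1 g1] R_len[OF n1 g2] le show ?thesis
  proof (cases rule: split3)
    case same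
    have "g1 - g2 \<in> Lt n (tip g1)" by (rule INCL[OF n g1 g2]) (use same in simp)
    then have "ctx x1 (g1 - g2) y1 \<in> Lt n (x1 @ tip g1 @ y1)" by (rule Lt_ctx[OF _ x1 y1])
    then show ?thesis using same by (simp add: ctx_diff)
  next
    case (ovl a b c)
    have "ctx [] g1 [c] - ctx [a] g2 [] \<in> Lt n [a, b, c]" by (rule OVL[OF n g1 g2 ovl(1,2)])
    then have "ctx x1 (ctx [] g1 [c] - ctx [a] g2 []) y2 \<in> Lt n (x1 @ [a, b, c] @ y2)"
      by (rule Lt_ctx[OF _ x1 y2])
    then show ?thesis using ovl by (simp add: ctx_diff ctx_ctx)
  next
    case (disj m)
    have m: "m \<in> lists (Xset n)" using y1 disj(2) by simp
    show ?thesis using DISJ[OF n1 g1 g2 x1 m y2] disj by simp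
  qed
qed

lemma KEY:
  fixes g1 g2 :: "sym list \<Rightarrow> 'k::field"
  assumes n: "2 \<le> n" "g1 \<in> Rset n" "g2 \<in> Rset n"
    "x1 \<in> lists (Xset n)" "y1 \<in> lists (Xset n)" "x2 \<in> lists (Xset n)" "y2 \<in> lists (Xset n)"
    and eq: "x1 @ tip g1 @ y1 = x2 @ tip g2 @ y2"
  shows "ctx x1 g1 y1 - ctx x2 g2 y2 \<in> Lt n (x1 @ tip g1 @ y1)"
proof (cases "length x1 \<le> length x2")
  case True show ?thesis by (rule KEY_le[OF assms True])
next
  case False
  have h: "ctx x2 g2 y2 - ctx x1 g1 y1 \<in> Lt n (x2 @ tip g2 @ y2)"
    by (rule KEY_le[OF n(1,3,2,6,7,4,5) eq[symmetric]]) (use False in simp)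
  show ?thesis by (rule Lt_eqI_neg[OF h]) (simp, rule eq[symmetric])
qed


lemma MI_I: "t \<in> T \<Longrightarrow> a \<in> lists (Xset n) \<Longrightarrow> b \<in> lists (Xset n) \<Longrightarrow> a @ t @ b \<in> mon_ideal n T"
  unfolding mon_ideal_def by blast

lemma red_step:
  assumes n: "2 \<le> n" and g0: "g0 \<in> Rset n" and x0: "x0 \<in> lists (Xset n)" and y0: "y0 \<in> lists (Xset n)"
    and W: "W = x0 @ tip g0 @ y0" and p: "p \<in> Le n W"
  shows "\<exists>c. p - sm c (ctx x0 g0 y0) \<in> Lt n W"
  using p
proof (induct rule: Le.induct)
  case Le_zero
  have "0 - sm 0 (ctx x0 g0 y0) = (0 :: sym list \<Rightarrow> 'a)" by (rule ext) (simp add: sm_apply)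
  then show ?case using Lt.Lt_zero by metis
next
  case (Le_gen g x y)
  show ?case
  proof (cases "x @ tip g @ y = W")
    case True
    have "sm 1 (ctx x0 g0 y0) = ctx x0 g0 y0" by (rule ext) (simp add: sm_apply)
    moreover have "ctx x g y - ctx x0 g0 y0 \<in> Lt n (x @ tip g @ y)"
      by (rule KEY) (use n g0 x0 y0 W Le_gen True in auto)
    ultimately show ?thesis using True by metis
  next
    case False
    then have "word_less (x @ tip g @ y) W" using Le_gen by blast
    then have "ctx x g y \<in> Lt n W" using Le_gen by (blast intro: Lt.Lt_gen)
    moreover have "ctx x g y - sm 0 (ctx x0 g0 y0) = ctx x g y" by (rule ext) (simp add: sm_apply)
    ultimately show ?thesis by metis
  qed
next
  case (Le_add p q)
  then obtain c1 c2 where c: "p - sm c1 (ctx x0 g0 y0) \<in> Lt n W" "q - sm c2 (ctx x0 g0 y0) \<in> Lt n W" by blast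
  have "(p + q) - sm (c1 + c2) (ctx x0 g0 y0) = (p - sm c1 (ctx x0 g0 y0)) + (q - sm c2 (ctx x0 g0 y0))"
    by (rule ext) (simp add: sm_apply algebra_simps)
  then show ?case using Lt.Lt_add[OF c] by metis
next
  case (Le_sm p c)
  then obtain c1 where c: "p - sm c1 (ctx x0 g0 y0) \<in> Lt n W" by blast
  have "sm c p - sm (c * c1) (ctx x0 g0 y0) = sm c (p - sm c1 (ctx x0 g0 y0))"
    by (rule ext) (simp add: sm_apply algebra_simps)
  then show ?case using Lt.Lt_sm[OF c] by metis
qed

lemma irred_step:
  fixes p :: "sym list \<Rightarrow> 'k::field"
  assumes irr: "\<And>x (g :: sym list \<Rightarrow> 'k) y. g \<in> Rset n \<Longrightarrow> x \<in> lists (Xset n) \<Longrightarrow> y \<in> lists (Xset n) \<Longrightarrow> x @ tip g @ y \<noteq> W"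
    and p: "p \<in> Le n W"
  shows "p \<in> Lt n W"
  using p
proof (induct rule: Le.induct)
  case Le_zero then show ?case by (rule Lt.Lt_zero)
next
  case (Le_gen g x y)
  then have "word_less (x @ tip g @ y) W" using irr[OF Le_gen(1-3)] by blast
  then show ?case using Le_gen by (blast intro: Lt.Lt_gen)
next
  case (Le_add p q) then show ?case by (blast intro: Lt.Lt_add)
next
  case (Le_sm p c) then show ?case by (blast intro: Lt.Lt_sm)
qed

lemma Lt_down:
  assumes n: "1 \<le> n" and p: "p \<in> Lt n W"
  shows "p = 0 \<or> (\<exists>W'. W' \<in> lists (Xset n) \<and> word_less W' W \<and> p \<in> Le n W')"
  using p
proof (induct rule: Lt.induct)
  case Lt_zero then show ?case by simp
next
  case (Lt_gen g x y)
  have "x @ tip g @ y \<in> lists (Xset n)" using Lt_gen R_lists[OF n Lt_gen(1)] by simp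
  moreover have "ctx x g y \<in> Le n (x @ tip g @ y)" using Lt_gen by (blast intro: Le.Le_gen)
  ultimately show ?case using Lt_gen(4) by blast
next
  case (Lt_add p q)
  show ?case
  proof (cases "p = 0")
    case True then show ?thesis using Lt_add by simp
  next
    case pnz: False
    show ?thesis
    proof (cases "q = 0")
      case True then show ?thesis using Lt_add by simp
    next
      case False
      then obtain W1 W2 where w: "W1 \<in> lists (Xset n)" "word_less W1 W" "p \<in> Le n W1"
        "W2 \<in> lists (Xset n)" "word_less W2 W" "q \<in> Le n W2" using Lt_add pnz by blast
      show ?thesis
      proof (cases "W1 = W2 \<or> word_less W1 W2")
        case True
        then have "p \<in> Le n W2" using Le_mono w by blast
        then show ?thesis using w by (blast intro: Le.Le_add)
      next
        case False
        then have "W2 = W1 \<or> word_less W2 W1" using wl_total by blast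
        then have "q \<in> Le n W1" using Le_mono w by blast
        then show ?thesis using w by (blast intro: Le.Le_add)
      qed
    qed
  qed
next
  case (Lt_sm p c)
  show ?case
  proof (cases "p = 0")
    case True
    have "sm c (0 :: sym list \<Rightarrow> 'a) = 0" by (rule ext) (simp add: sm_apply)
    then show ?thesis using True by simp
  next
    case False then show ?thesis using Lt_sm by (blast intro: Le.Le_sm)
  qed
qed

lemma main_aux:
  assumes n: "2 \<le> n"
  shows "\<forall>p :: sym list \<Rightarrow> 'a::field. W \<in> lists (Xset n) \<longrightarrow> p \<in> Le n W \<longrightarrow> p \<noteq> 0 \<longrightarrow> tip p \<in> mon_ideal n (tip ` (Rset n :: (sym list \<Rightarrow> 'a) set))"
  using wf_wl[of n]
proof (induct W rule: wf_induct_rule)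
  case (less W)
  have n1: "1 \<le> n" using n by simp
  show ?case
  proof (intro allI impI)
    fix p :: "sym list \<Rightarrow> 'a" assume W: "W \<in> lists (Xset n)" and p: "p \<in> Le n W" and nz: "p \<noteq> 0"
    have fromLt: "tip p \<in> mon_ideal n (tip ` (Rset n :: (sym list \<Rightarrow> 'a) set))" if pl: "p \<in> Lt n W"
    proof -
      obtain W' where "W' \<in> lists (Xset n)" "word_less W' W" "p \<in> Le n W'"
        using Lt_down[OF n1 pl] nz by blast
      then have "(W', W) \<in> {(v,w). v \<in> lists (Xset n) \<and> w \<in> lists (Xset n) \<and> word_less v w}"
        using W by simp
      then have "\<forall>p :: sym list \<Rightarrow> 'a. W' \<in> lists (Xset n) \<longrightarrow> p \<in> Le n W' \<longrightarrow> p \<noteq> 0 \<longrightarrow> tip p \<in> mon_ideal n (tip ` (Rset n :: (sym list \<Rightarrow> 'a) set))"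
        by (rule less)
      then show ?thesis using \<open>W' \<in> lists (Xset n)\<close> \<open>p \<in> Le n W'\<close> nz by blast
    qed
    show "tip p \<in> mon_ideal n (tip ` (Rset n :: (sym list \<Rightarrow> 'a) set))"
    proof (cases "\<exists>x (g :: sym list \<Rightarrow> 'a) y. g \<in> Rset n \<and> x \<in> lists (Xset n) \<and> y \<in> lists (Xset n) \<and> x @ tip g @ y = W")
      case True
      then obtain x0 y0 and g0 :: "sym list \<Rightarrow> 'a" where r: "g0 \<in> Rset n" "x0 \<in> lists (Xset n)" "y0 \<in> lists (Xset n)"
        "W = x0 @ tip g0 @ y0" by blast
      obtain c where c: "p - sm c (ctx x0 g0 y0) \<in> Lt n W" using red_step[OF n r p] by blast
      show ?thesis
      proof (cases "c = 0")
        case True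
        have "p - sm c (ctx x0 g0 y0) = p" using True by (intro ext) (simp add: sm_apply)
        then show ?thesis using fromLt c by metis
      next
        case False
        have q0: "(p - sm c (ctx x0 g0 y0)) W = 0"
          using Lt_supp[OF n1 c] wl_irrefl by blast
        have "ctx x0 g0 y0 W = 1" using r R_top[OF n1 r(1)] by simp
        then have pW: "p W = c" using q0 by (simp add: sm_apply)
        have "tip p = W"
        proof (rule tipI)
          show "p W \<noteq> 0" using pW False by simp
          show "\<And>v. p v \<noteq> 0 \<Longrightarrow> v = W \<or> word_less v W" by (rule Le_supp[OF n1 p])
        qed
        then show ?thesis using r by (auto intro!: MI_I)
      qed
    next
      case False
      then have "p \<in> Lt n W" using irred_step[OF _ p] by blast
      then show ?thesis by (rule fromLt)
    qed
  qed
qed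


lemma pmul_add_left: "pmul (p + p') q = pmul p q + pmul p' q"
  by (rule ext) (simp add: pmul_def distrib_right sum.distrib)
lemma pmul_add_right: "pmul q (p + p') = pmul q p + pmul q p'"
  by (rule ext) (simp add: pmul_def distrib_left sum.distrib)
lemma pmul_zero_left: "pmul 0 q = 0"
  by (rule ext) (simp add: pmul_def)
lemma pmul_zero_right: "pmul q 0 = 0"
  by (rule ext) (simp add: pmul_def)
lemma pmul_sm_left: "pmul (sm c p) q = sm c (pmul p q)"
  by (rule ext) (simp add: pmul_def sm_apply sum_distrib_left mult.assoc)
lemma pmul_sm_right: "pmul q (sm c p) = sm c (pmul q p)"
  by (rule ext) (simp add: pmul_def sm_apply sum_distrib_left algebra_simps)

lemma pmul_sum_left: "pmul (\<Sum>i\<in>A. f i) q = (\<Sum>i\<in>A. pmul (f i) q)"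
proof (induct A rule: infinite_finite_induct)
  case (infinite A) then show ?case by (metis sum.infinite pmul_zero_left)
next
  case empty then show ?case by (metis sum.empty pmul_zero_left)
next
  case (insert a A) then show ?case by (metis sum.insert pmul_add_left)
qed

lemma pmul_sum_right: "pmul q (\<Sum>i\<in>A. f i) = (\<Sum>i\<in>A. pmul q (f i))"
proof (induct A rule: infinite_finite_induct)
  case (infinite A) then show ?case by (metis sum.infinite pmul_zero_right)
next
  case empty then show ?case by (metis sum.empty pmul_zero_right)
next
  case (insert a A) then show ?case by (metis sum.insert pmul_add_right)
qed

lemma pmul_mw_left: "pmul (mw x) q = ctx x q []"
proof (rule ext)
  fix z
  show "pmul (mw x) q z = ctx x q [] z"
  proof (cases "\<exists>u. z = x @ u")
    case True
    then obtain u where u: "z = x @ u" by blast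
    have "pmul (mw x) q z = (\<Sum>k\<le>length z. if k = length x then q (drop k z) else 0)"
      unfolding pmul_def mw_apply
    proof (rule sum.cong)
      fix k assume "k \<in> {..length z}"
      then have kz: "k \<le> length z" by simp
      have "(take k z = x) = (k = length x)"
      proof
        assume t: "take k z = x"
        have "length (take k z) = length x" using t by simp
        then show "k = length x" using kz by simp
      next
        assume "k = length x" then show "take k z = x" using u by simp
      qed
      then show "(if take k z = x then 1 else 0) * q (drop k z) = (if k = length x then q (drop k z) else 0)"
        by simp
    qed simp
    also have "\<dots> = q u" using u by simp
    finally show ?thesis using u ctx_at[of x q "[]" u] by simp
  next
    case False
    then have "\<And>k. take k z \<noteq> x" by (metis append_take_drop_id)
    then have "pmul (mw x) q z = 0" unfolding pmul_def mw_apply by simp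
    moreover have "ctx x q [] z = 0" using False by (intro ctx_out) simp
    ultimately show ?thesis by simp
  qed
qed

lemma pmul_mw_right: "pmul q (mw y) = ctx [] q y"
proof (rule ext)
  fix z
  show "pmul q (mw y) z = ctx [] q y z"
  proof (cases "\<exists>u. z = u @ y")
    case True
    then obtain u where u: "z = u @ y" by blast
    have "pmul q (mw y) z = (\<Sum>k\<le>length z. if k = length u then q (take k z) else 0)"
      unfolding pmul_def mw_apply
    proof (rule sum.cong)
      fix k assume "k \<in> {..length z}"
      then have kz: "k \<le> length z" by simp
      have "(drop k z = y) = (k = length u)"
      proof
        assume d: "drop k z = y"
        have "length (drop k z) = length y" using d by simp
        then have "length z - k = length y" by simp
        then show "k = length u" using kz u by simp
      next
        assume "k = length u" then show "drop k z = y" using u by simp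
      qed
      then show "q (take k z) * (if drop k z = y then 1 else 0) = (if k = length u then q (take k z) else 0)"
        by simp
    qed simp
    also have "\<dots> = q u" using u by simp
    finally show ?thesis using u ctx_at[of "[]" q y u] by simp
  next
    case False
    then have "\<And>k. drop k z \<noteq> y" by (metis append_take_drop_id)
    then have "pmul q (mw y) z = 0" unfolding pmul_def mw_apply by simp
    moreover have "ctx [] q y z = 0" using False by (intro ctx_out) simp
    ultimately show ?thesis by simp
  qed
qed

lemma poly_decomp:
  assumes "finite {w. a w \<noteq> 0}"
  shows "a = (\<Sum>x\<in>{w. a w \<noteq> 0}. sm (a x) (mw x))"
proof (rule ext)
  fix z
  have "(\<Sum>x\<in>{w. a w \<noteq> 0}. sm (a x) (mw x)) z = (\<Sum>x\<in>{w. a w \<noteq> 0}. if x = z then a x else 0)"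
    unfolding sum_apply by (rule sum.cong) (auto simp: sm_apply mw_apply)
  also have "\<dots> = a z" using assms by (simp add: sum.delta)
  finally show "a z = (\<Sum>x\<in>{w. a w \<noteq> 0}. sm (a x) (mw x)) z" by simp
qed

lemma pmul_expand:
  assumes "finite {w. a w \<noteq> 0}" "finite {w. b w \<noteq> 0}"
  shows "pmul (pmul a g) b = (\<Sum>y\<in>{w. b w \<noteq> 0}. \<Sum>x\<in>{w. a w \<noteq> 0}. sm (b y) (sm (a x) (ctx x g y)))"
proof -
  have "pmul (pmul a g) b = pmul (pmul (\<Sum>x\<in>{w. a w \<noteq> 0}. sm (a x) (mw x)) g) (\<Sum>y\<in>{w. b w \<noteq> 0}. sm (b y) (mw y))"
    using poly_decomp[OF assms(1)] poly_decomp[OF assms(2)] by (rule arg_cong2[where f = "\<lambda>a b. pmul (pmul a g) b"])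
  also have "\<dots> = (\<Sum>y\<in>{w. b w \<noteq> 0}. \<Sum>x\<in>{w. a w \<noteq> 0}. sm (b y) (sm (a x) (pmul (pmul (mw x) g) (mw y))))"
    by (simp add: pmul_sum_left pmul_sum_right pmul_sm_left pmul_sm_right sm_sum)
  also have "\<dots> = (\<Sum>y\<in>{w. b w \<noteq> 0}. \<Sum>x\<in>{w. a w \<noteq> 0}. sm (b y) (sm (a x) (ctx x g y)))"
    by (simp add: pmul_mw_left pmul_mw_right ctx_ctx)
  finally show ?thesis .
qed


definition InLe :: "nat \<Rightarrow> (sym list \<Rightarrow> 'k::field) \<Rightarrow> bool" where
  "InLe n p \<longleftrightarrow> (\<exists>W \<in> lists (Xset n). p \<in> Le n W)"

lemma InLe_zero: "InLe n 0"
  unfolding InLe_def using Le.Le_zero[of n "[]"] by auto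

lemma InLe_add: assumes "InLe n p" "InLe n q" shows "InLe n (p + q)"
proof -
  obtain W1 W2 where w: "W1 \<in> lists (Xset n)" "p \<in> Le n W1" "W2 \<in> lists (Xset n)" "q \<in> Le n W2"
    using assms unfolding InLe_def by blast
  show ?thesis
  proof (cases "W1 = W2 \<or> word_less W1 W2")
    case True
    then have "p \<in> Le n W2" using Le_mono w by blast
    then show ?thesis using w unfolding InLe_def by (blast intro: Le.Le_add)
  next
    case False
    then have "W2 = W1 \<or> word_less W2 W1" using wl_total by blast
    then have "q \<in> Le n W1" using Le_mono w by blast
    then show ?thesis using w unfolding InLe_def by (blast intro: Le.Le_add)
  qed
qed

lemma InLe_sm: "InLe n p \<Longrightarrow> InLe n (sm c p)"
  unfolding InLe_def by (blast intro: Le.Le_sm)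

lemma InLe_sum: "(\<And>i. i \<in> A \<Longrightarrow> InLe n (f i)) \<Longrightarrow> InLe n (\<Sum>i\<in>A. f i)"
proof (induct A rule: infinite_finite_induct)
  case (infinite A) then show ?case by (metis sum.infinite InLe_zero)
next
  case empty then show ?case by (metis sum.empty InLe_zero)
next
  case (insert a A) then show ?case by (metis sum.insert InLe_add insertI1 insertI2)
qed

lemma InLe_ctx:
  assumes "1 \<le> n" "g \<in> Rset n" "x \<in> lists (Xset n)" "y \<in> lists (Xset n)"
  shows "InLe n (ctx x g y)"
proof -
  have "x @ tip g @ y \<in> lists (Xset n)" using assms R_lists[OF assms(1,2)] by simp
  moreover have "ctx x g y \<in> Le n (x @ tip g @ y)" using assms by (blast intro: Le.Le_gen)
  ultimately show ?thesis unfolding InLe_def by blast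
qed

lemma poly_on_lists: "poly_on n a \<Longrightarrow> a x \<noteq> 0 \<Longrightarrow> x \<in> lists (Xset n)"
  unfolding poly_on_def by auto

lemma ideal_InLe:
  assumes n: "1 \<le> n" and p: "p \<in> ideal_gen n (Rset n)"
  shows "InLe n p"
  using p
proof (induct rule: ideal_gen.induct)
  case zero
  have "(\<lambda>_. 0) = (0 :: sym list \<Rightarrow> 'a)" by (simp add: zero_fun_def)
  then show ?case using InLe_zero by simp
next
  case (gen g a b)
  have fa: "finite {w. a w \<noteq> 0}" and fb: "finite {w. b w \<noteq> 0}" using gen by (auto simp: poly_on_def)
  show ?case unfolding pmul_expand[OF fa fb]
  proof (intro InLe_sum InLe_sm InLe_ctx[OF n gen(1)])
    fix y x assume "y \<in> {w. b w \<noteq> 0}" "x \<in> {w. a w \<noteq> 0}"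
    then show "x \<in> lists (Xset n)" "y \<in> lists (Xset n)" using gen poly_on_lists by auto
  qed
next
  case (add p q)
  have "InLe n (p + q)" using InLe_add add by blast
  then show ?case by (simp add: padd_def plus_fun_def)
qed

theorem proposition3p7:
  fixes n :: nat
  assumes "n \<ge> 2"
  shows "Tip (ideal_gen n (Rset n :: (sym list \<Rightarrow> 'k::field) set))
           = mon_ideal n (tip ` (Rset n :: (sym list \<Rightarrow> 'k) set))"
proof
  have n1: "1 \<le> n" using assms by simp
  show "Tip (ideal_gen n (Rset n :: (sym list \<Rightarrow> 'k::field) set)) \<subseteq> mon_ideal n (tip ` (Rset n :: (sym list \<Rightarrow> 'k) set))"
  proof
    fix w assume "w \<in> Tip (ideal_gen n (Rset n :: (sym list \<Rightarrow> 'k::field) set))"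
    then obtain p :: "sym list \<Rightarrow> 'k" where p: "p \<in> ideal_gen n (Rset n)" "p \<noteq> (\<lambda>_. 0)" "w = tip p"
      unfolding Tip_def by blast
    obtain W where W: "W \<in> lists (Xset n)" "p \<in> Le n W"
      using ideal_InLe[OF n1 p(1)] unfolding InLe_def by blast
    have "p \<noteq> 0" using p(2) by (simp add: zero_fun_def)
    then show "w \<in> mon_ideal n (tip ` (Rset n :: (sym list \<Rightarrow> 'k) set))"
      using main_aux[OF assms] W p(3) by blast
  qed
  show "mon_ideal n (tip ` (Rset n :: (sym list \<Rightarrow> 'k) set)) \<subseteq> Tip (ideal_gen n (Rset n :: (sym list \<Rightarrow> 'k::field) set))"
  proof
    fix w assume "w \<in> mon_ideal n (tip ` (Rset n :: (sym list \<Rightarrow> 'k) set))"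
    then obtain a b and g :: "sym list \<Rightarrow> 'k" where g: "g \<in> Rset n" "a \<in> lists (Xset n)" "b \<in> lists (Xset n)"
      "w = a @ tip g @ b" unfolding mon_ideal_def by blast
    have pa: "poly_on n (mw a :: sym list \<Rightarrow> 'k)" "poly_on n (mw b :: sym list \<Rightarrow> 'k)"
      using g unfolding poly_on_def by (auto simp: mw_apply)
    let ?p = "pmul (pmul (mw a) g) (mw b)"
    have pin: "?p \<in> ideal_gen n (Rset n)" by (rule ideal_gen.gen[OF g(1) pa])
    have pe: "?p = ctx a g b" by (simp add: pmul_mw_left pmul_mw_right ctx_ctx)
    have top: "?p w = 1" using g R_top[OF n1 g(1)] pe by simp
    have "tip ?p = w"
    proof (rule tipI)
      show "?p w \<noteq> 0" using top by simp
      fix v assume "?p v \<noteq> 0"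
      then have "ctx a g b v \<noteq> 0" using pe by simp
      then obtain u where u: "v = a @ u @ b" "g u \<noteq> 0" using ctx_nz by blast
      then have "u = tip g \<or> word_less u (tip g)" using R_supp[OF n1 g(1)] by blast
      then show "v = w \<or> word_less v w" using u g(4) wl_ctx[of u "tip g" a b] by blast
    qed
    moreover have "?p \<noteq> (\<lambda>_. 0)" using top by auto
    ultimately show "w \<in> Tip (ideal_gen n (Rset n :: (sym list \<Rightarrow> 'k::field) set))"
      using pin unfolding Tip_def by blast
  qed
qed


end
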